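(* Let $p,q\ge2$ with $q-1=d(p-1)$ for a positive integer $d$. The embedding $j_1:F(p)\to F(q)$ determined by $x_i\mapsto x_{di}$ ($i\ge0$) is a quasi-isometric embedding with respect to the word metrics of $F(p)$ and $F(q)$.
   Context: For $r\ge2$, $F(r)$ is the group of piecewise-linear orientation-preserving homeomorphisms of $[0,1]$ with breakpoints in $\mathbb{Z}[1/r]$ and slopes integer powers of $r$, with presentation $\langle x_0,x_1,\dots\mid x_i^{-1}x_jx_i=x_{j+r-1}\ (i<j)\rangle$; it is generated by $x_0,\dots,x_{r-1}$ and its word metric is taken with respect to these generators. The assignment $x_i\mapsto x_{di}$ from the generators of $F(p)$ to $F(q)$ respects the relations and defines an injective homomorphism $j_1$. A map $f$ between metric spaces is a quasi-isometric embedding if there are constants $C\ge1$, $K\ge0$ with $\frac1C d(a,b)-K\le d(f(a),f(b))\le C d(a,b)+K$ for all $a,b$. *)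

theory Defs imports Complex_Main begin

text \<open>Words over the infinite generating set x_0, x_1, ... :
 a letter (i, False) stands for x_i and (i, True) for x_i inverse.\<close>
type_synonym letter = "nat \<times> bool"

text \<open>Equality in F(r) given by the presentation
 generators x_0, x_1, ... and relations x_i^-1 x_j x_i = x_(j+r-1) for i < j:
 the congruence on words generated by free cancellation and the relators.\<close>
inductive fr_eq :: "nat \<Rightarrow> letter list \<Rightarrow> letter list \<Rightarrow> bool" for r where
  refl: "fr_eq r w w"
| sym: "fr_eq r u v \<Longrightarrow> fr_eq r v u"
| trans: "fr_eq r u v \<Longrightarrow> fr_eq r v w \<Longrightarrow> fr_eq r u w"
| cancel: "fr_eq r (u @ [(i, b), (i, \<not> b)] @ v) (u @ v)"
| rel: "i < j \<Longrightarrow>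
    fr_eq r (u @ [(i, True), (j, False), (i, False)] @ v) (u @ [(j + r - 1, False)] @ v)"

definition winv :: "letter list \<Rightarrow> letter list" where
  "winv w = rev (map (\<lambda>(i, b). (i, \<not> b)) w)"

definition word_dist :: "nat \<Rightarrow> letter list \<Rightarrow> letter list \<Rightarrow> nat" where
  "word_dist r u v = (LEAST n. \<exists>w. length w = n \<and> (\<forall>(i, b) \<in> set w. i < r)
                                 \<and> fr_eq r w (winv u @ v))"

definition j1 :: "nat \<Rightarrow> letter list \<Rightarrow> letter list" where
  "j1 d w = map (\<lambda>(i, b). (d * i, b)) w"

end

theory Submission imports Defs begin

lemma fr_cong: "fr_eq r u v \<Longrightarrow> fr_eq r (x @ u @ y) (x @ v @ y)"
proof (induction rule: fr_eq.induct)
  case (refl w) then show ?case by (rule fr_eq.refl)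
next
  case (sym u v) show ?case using sym.IH by (rule fr_eq.sym)
next
  case (trans u v w) then show ?case by (metis fr_eq.trans)
next
  case (cancel u i b v)
  have "fr_eq r ((x @ u) @ [(i, b), (i, \<not> b)] @ (v @ y)) ((x @ u) @ (v @ y))" by (rule fr_eq.cancel)
  then show ?case by simp
next
  case (rel i j u v)
  have "fr_eq r ((x @ u) @ [(i, True), (j, False), (i, False)] @ (v @ y)) ((x @ u) @ [(j + r - 1, False)] @ (v @ y))"
    using rel by (rule fr_eq.rel)
  then show ?case by simp
qed

lemma fr_app: "fr_eq r u u' \<Longrightarrow> fr_eq r v v' \<Longrightarrow> fr_eq r (u @ v) (u' @ v')"
proof -
  assume a: "fr_eq r u u'" and b: "fr_eq r v v'"
  have "fr_eq r ([] @ u @ v) ([] @ u' @ v)" using fr_cong[OF a] .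
  moreover have "fr_eq r (u' @ v @ []) (u' @ v' @ [])" using fr_cong[OF b] .
  ultimately show ?thesis by (metis fr_eq.trans append_Nil append_Nil2)
qed

lemma fr_trans': "fr_eq r u v \<Longrightarrow> fr_eq r v w \<Longrightarrow> fr_eq r u w" by (rule fr_eq.trans)
lemma fr_sym': "fr_eq r u v \<Longrightarrow> fr_eq r v u" by (rule fr_eq.sym)
lemma fr_refl': "fr_eq r u u" by (rule fr_eq.refl)

lemma winv_Nil[simp]: "winv [] = []" by (simp add: winv_def)
lemma winv_Cons[simp]: "winv (l # w) = winv w @ [(fst l, \<not> snd l)]"
  by (cases l) (simp add: winv_def)
lemma winv_append[simp]: "winv (u @ v) = winv v @ winv u" by (simp add: winv_def)
lemma length_winv[simp]: "length (winv w) = length w" by (simp add: winv_def)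
lemma winv_winv[simp]: "winv (winv w) = w"
  by (induction w) auto
lemma set_winv: "(i, b) \<in> set (winv w) \<longleftrightarrow> (i, \<not> b) \<in> set w"
  by (induction w) auto

lemma cancel_pair: "fr_eq r [(i, b), (i, \<not> b)] []"
  using fr_eq.cancel[of r "[]" i b "[]"] by simp

lemma cancel_w: "fr_eq r (w @ winv w) []"
proof (induction w)
  case Nil then show ?case by (simp add: fr_eq.refl)
next
  case (Cons l w)
  obtain i b where l: "l = (i, b)" by (cases l)
  have "fr_eq r ([l] @ (w @ winv w) @ [(i, \<not> b)]) ([l] @ [] @ [(i, \<not> b)])"
    by (rule fr_cong[OF Cons.IH])
  then have "fr_eq r (l # w @ winv (l # w)) [(i, b), (i, \<not> b)]" using l by simp
  then have "fr_eq r (l # w @ winv (l # w)) []" using cancel_pair fr_eq.trans by blast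
  then show ?case by simp
qed

lemma cancel_w': "fr_eq r (winv w @ w) []"
  using cancel_w[of r "winv w"] by simp

lemma fr_winv: "fr_eq r u v \<Longrightarrow> fr_eq r (winv u) (winv v)"
proof (induction rule: fr_eq.induct)
  case (refl w) then show ?case by (rule fr_eq.refl)
next
  case (sym u v) show ?case using sym.IH by (rule fr_eq.sym)
next
  case (trans u v w) then show ?case by (metis fr_eq.trans)
next
  case (cancel u i b v)
  have "fr_eq r (winv v @ [(i, b), (i, \<not> b)] @ winv u) (winv v @ winv u)" by (rule fr_eq.cancel)
  then show ?case by simp
next
  case (rel i j u v)
  let ?A = "[(i, True), (j, True), (i, False)]"
  let ?c = "j + r - 1"
  have r1: "fr_eq r [(i, True), (j, False), (i, False)] [(?c, False)]"
    using fr_eq.rel[OF rel, where u="[]" and v="[]"] by simp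
  have "fr_eq r ?A (?A @ [(?c, False), (?c, True)])"
    using fr_cong[OF cancel_pair[of r ?c False], of ?A "[]"] by (simp add: fr_eq.sym)
  moreover have "fr_eq r (?A @ [(?c, False)] @ [(?c, True)]) (?A @ [(i, True), (j, False), (i, False)] @ [(?c, True)])"
    by (rule fr_cong[OF fr_eq.sym[OF r1]])
  moreover have "fr_eq r ([(i, True), (j, True)] @ [(i, False), (i, True)] @ [(j, False), (i, False), (?c, True)])
     ([(i, True), (j, True)] @ [] @ [(j, False), (i, False), (?c, True)])"
    using fr_eq.cancel[of r "[(i, True), (j, True)]" i False "[(j, False), (i, False), (?c, True)]"] by simp
  moreover have "fr_eq r ([(i, True)] @ [(j, True), (j, False)] @ [(i, False), (?c, True)])
     ([(i, True)] @ [] @ [(i, False), (?c, True)])"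
    using fr_eq.cancel[of r "[(i, True)]" j True "[(i, False), (?c, True)]"] by simp
  moreover have "fr_eq r ([] @ [(i, True), (i, False)] @ [(?c, True)]) ([] @ [] @ [(?c, True)])"
    using fr_eq.cancel[of r "[]" i True "[(?c, True)]"] by simp
  ultimately have "fr_eq r ?A [(?c, True)]" by simp (meson fr_eq.trans)
  then have "fr_eq r (winv v @ ?A @ winv u) (winv v @ [(?c, True)] @ winv u)" by (rule fr_cong)
  then show ?case by simp
qed

type_synonym pt = "nat \<times> (nat \<Rightarrow> nat)"

definition vs :: "nat \<Rightarrow> (nat \<Rightarrow> nat) \<Rightarrow> bool" where "vs r s \<longleftrightarrow> (\<forall>i. s i < r)"
definition pre :: "nat list \<Rightarrow> (nat \<Rightarrow> nat) \<Rightarrow> nat \<Rightarrow> nat" where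
  "pre v s = (\<lambda>i. if i < length v then v ! i else s (i - length v))"
definition stl :: "(nat \<Rightarrow> nat) \<Rightarrow> nat \<Rightarrow> nat" where "stl s = (\<lambda>i. s (Suc i))"

fun gen :: "nat \<Rightarrow> letter \<Rightarrow> pt \<Rightarrow> pt" where
  "gen r (k, b) (n, s) = (if b then (if n < k then (n, s) else if n = k then (k + s 0, stl s) else (n + (r - 1), s))
      else (if n < k then (n, s) else if n < k + r then (k, pre [n - k] s) else (n - (r - 1), s)))"

primrec act :: "nat \<Rightarrow> letter list \<Rightarrow> pt \<Rightarrow> pt" where
  "act r [] = id"
| "act r (l # w) = gen r l \<circ> act r w"

definition vpt :: "nat \<Rightarrow> pt \<Rightarrow> bool" where "vpt r p \<longleftrightarrow> vs r (snd p)"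

lemma pre_Nil[simp]: "pre [] s = s" by (simp add: pre_def)
lemma pre_append: "pre (u @ v) s = pre u (pre v s)"
  by (auto simp: pre_def nth_append fun_eq_iff)
lemma pre_Cons: "pre (a # v) s = pre [a] (pre v s)"
  using pre_append[of "[a]" v s] by simp
lemma pre1_0[simp]: "pre [a] s 0 = a" by (simp add: pre_def)
lemma pre1_Suc[simp]: "pre [a] s (Suc i) = s i" by (simp add: pre_def)
lemma stl_pre1[simp]: "stl (pre [a] s) = s" by (simp add: stl_def pre_def fun_eq_iff)
lemma pre_stl[simp]: "pre [s 0] (stl s) = s"
  by (auto simp: stl_def pre_def fun_eq_iff)
lemma pre_lt: "i < length v \<Longrightarrow> pre v s i = v ! i" by (simp add: pre_def)
lemma pre_ge: "pre v s (length v + i) = s i" by (simp add: pre_def)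

lemma vs_pre[simp]: "vs r (pre v s) \<longleftrightarrow> (\<forall>a\<in>set v. a < r) \<and> vs r s"
proof
  assume h: "vs r (pre v s)"
  have "\<forall>a\<in>set v. a < r"
  proof
    fix a assume "a \<in> set v"
    then obtain i where "i < length v" "v ! i = a" by (auto simp: in_set_conv_nth)
    then show "a < r" using h unfolding vs_def by (metis pre_lt)
  qed
  moreover have "vs r s" using h unfolding vs_def by (metis pre_ge)
  ultimately show "(\<forall>a\<in>set v. a < r) \<and> vs r s" by blast
next
  assume "(\<forall>a\<in>set v. a < r) \<and> vs r s"
  then show "vs r (pre v s)" by (auto simp: vs_def pre_def)
qed

lemma vs_stl[simp]: "vs r s \<Longrightarrow> vs r (stl s)" by (simp add: vs_def stl_def)

lemma gen_valid: "r \<ge> 1 \<Longrightarrow> vpt r p \<Longrightarrow> vpt r (gen r l p)"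
  by (cases p; cases l) (auto simp: vpt_def)

lemma act_valid: "r \<ge> 1 \<Longrightarrow> vpt r p \<Longrightarrow> vpt r (act r w p)"
  by (induction w) (auto simp: gen_valid)

lemma act_append[simp]: "act r (u @ v) = act r u \<circ> act r v"
  by (induction u) auto

lemma gen_inv: "r \<ge> 1 \<Longrightarrow> vpt r p \<Longrightarrow> gen r (k, \<not> b) (gen r (k, b) p) = p"
proof -
  assume r: "r \<ge> 1" and v: "vpt r p"
  obtain n s where p: "p = (n, s)" by (cases p)
  have s0: "s 0 < r" using v p by (simp add: vpt_def vs_def)
  show ?thesis using r s0 unfolding p by (cases b) auto
qed

lemma gen_inv': "r \<ge> 1 \<Longrightarrow> vpt r p \<Longrightarrow> gen r (fst l, \<not> snd l) (gen r l p) = p"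
  using gen_inv[of r p "fst l" "snd l"] by simp

lemma act_winv: "r \<ge> 1 \<Longrightarrow> vpt r p \<Longrightarrow> act r (winv w) (act r w p) = p"
proof (induction w arbitrary: p)
  case Nil then show ?case by simp
next
  case (Cons l w)
  have "act r (winv (l # w)) (act r (l # w) p) = act r (winv w) (gen r (fst l, \<not> snd l) (gen r l (act r w p)))"
    by simp
  also have "\<dots> = act r (winv w) (act r w p)" using Cons.prems gen_inv' act_valid by simp
  also have "\<dots> = p" using Cons by simp
  finally show ?case .
qed

lemma act_winv2: "r \<ge> 1 \<Longrightarrow> vpt r p \<Longrightarrow> act r w (act r (winv w) p) = p"
  using act_winv[of r p "winv w"] by simp

lemma act_inj: "r \<ge> 1 \<Longrightarrow> vpt r p \<Longrightarrow> vpt r q \<Longrightarrow> act r w p = act r w q \<Longrightarrow> p = q"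
  by (metis act_winv)

lemma gen_rel: "r \<ge> 1 \<Longrightarrow> i < j \<Longrightarrow> vpt r p \<Longrightarrow>
   gen r (i, True) (gen r (j, False) (gen r (i, False) p)) = gen r (j + r - 1, False) p"
proof -
  assume r: "r \<ge> 1" and ij: "i < j" and v: "vpt r p"
  obtain n s where p: "p = (n, s)" by (cases p)
  consider (a) "n < i" | (b) "i \<le> n" "n < i + r" | (c) "i + r \<le> n" "n - (r - 1) < j"
    | (d) "j \<le> n - (r - 1)" "n - (r - 1) < j + r" | (e) "j + r \<le> n - (r - 1)" by linarith
  then show ?thesis
  proof cases
    case a
    then have "n < j + r - 1" "n < j" using ij r by linarith+
    then show ?thesis unfolding p using r ij a by simp
  next
    case b
    then have "n < j + r - 1" using ij r by linarith
    then show ?thesis unfolding p using r ij b by simp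
  next
    case c
    define m where "m = n - (r - 1)"
    have mc: "m < j" "m > i" "n = m + (r - 1)" using c r unfolding m_def by linarith+
    have "n \<ge> i + r" using c by linarith
    then have h1: "gen r (i, False) (n, s) = (m, s)" by (simp add: m_def)
    have h2: "gen r (j, False) (m, s) = (m, s)" using mc by simp
    have h3: "gen r (i, True) (m, s) = (n, s)" using mc by simp
    have "n < j + r - 1" using mc r by linarith
    then have h4: "gen r (j + r - 1, False) (n, s) = (n, s)" by simp
    show ?thesis unfolding p h1 h2 h3 h4 ..
  next
    case d
    define m where "m = n - (r - 1)"
    have mc: "j \<le> m" "m < j + r" "n = m + (r - 1)" using d r ij unfolding m_def by linarith+
    have "n \<ge> i + r" using d ij r by linarith
    then have h1: "gen r (i, False) (n, s) = (m, s)" by (simp add: m_def)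
    have h2: "gen r (j, False) (m, s) = (j, pre [m - j] s)" using mc by simp
    have h3: "gen r (i, True) (j, pre [m - j] s) = (j + (r - 1), pre [m - j] s)" using ij by simp
    have "j + r - 1 \<le> n" "n < j + r - 1 + r" "n - (j + r - 1) = m - j" using mc r by linarith+
    then have h4: "gen r (j + r - 1, False) (n, s) = (j + (r - 1), pre [m - j] s)"
      using r by simp
    show ?thesis unfolding p h1 h2 h3 h4 ..
  next
    case e
    define m where "m = n - (r - 1)"
    have mc: "j + r \<le> m" "n = m + (r - 1)" using e r ij unfolding m_def by linarith+
    define m2 where "m2 = m - (r - 1)"
    have m2c: "m = m2 + (r - 1)" "m2 > i" using mc ij r unfolding m2_def by linarith+
    have "n \<ge> i + r" using e ij r by linarith
    then have h1: "gen r (i, False) (n, s) = (m, s)" by (simp add: m_def)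
    have h2: "gen r (j, False) (m, s) = (m2, s)" using mc by (simp add: m2_def)
    have h3: "gen r (i, True) (m2, s) = (m, s)" using m2c by simp
    have "\<not> n < j + r - 1 + r" "\<not> n < j + r - 1" using mc r by linarith+
    then have h4: "gen r (j + r - 1, False) (n, s) = (m, s)" using r by (simp add: m_def)
    show ?thesis unfolding p h1 h2 h3 h4 ..
  qed
qed

lemma act_fr: "fr_eq r u v \<Longrightarrow> r \<ge> 1 \<Longrightarrow> vpt r p \<Longrightarrow> act r u p = act r v p"
proof (induction arbitrary: p rule: fr_eq.induct)
  case (refl w) then show ?case by simp
next
  case (sym u v) then show ?case by simp
next
  case (trans u v w) then show ?case by simp
next
  case (cancel u i b v)
  have "gen r (i, b) (gen r (i, \<not> b) (act r v p)) = act r v p"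
    using gen_inv[of r "act r v p" i "\<not> b"] act_valid cancel by simp
  then show ?case by simp
next
  case (rel i j u v)
  have "gen r (i, True) (gen r (j, False) (gen r (i, False) (act r v p))) = gen r (j + r - 1, False) (act r v p)"
    using gen_rel rel act_valid by blast
  then show ?case by simp
qed

type_synonym cyl = "nat \<times> nat list"

definition cat :: "cyl \<Rightarrow> (nat \<Rightarrow> nat) \<Rightarrow> pt" where "cat c s = (fst c, pre (snd c) s)"
definition vcyl :: "nat \<Rightarrow> cyl \<Rightarrow> bool" where "vcyl r c \<longleftrightarrow> (\<forall>a\<in>set (snd c). a < r)"
definition good :: "nat \<Rightarrow> (pt \<Rightarrow> pt) \<Rightarrow> cyl \<Rightarrow> bool" where
  "good r f c \<longleftrightarrow> (\<exists>c'. \<forall>s. vs r s \<longrightarrow> f (cat c s) = cat c' s)"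
definition Bad :: "nat \<Rightarrow> (pt \<Rightarrow> pt) \<Rightarrow> cyl set" where "Bad r f = {c. vcyl r c \<and> \<not> good r f c}"
definition cimg :: "nat \<Rightarrow> (pt \<Rightarrow> pt) \<Rightarrow> cyl \<Rightarrow> cyl" where
  "cimg r f c = (THE c'. \<forall>s. vs r s \<longrightarrow> f (cat c s) = cat c' s)"
definition pres :: "nat \<Rightarrow> (pt \<Rightarrow> pt) \<Rightarrow> bool" where "pres r f \<longleftrightarrow> (\<forall>p. vpt r p \<longrightarrow> vpt r (f p))"
definition injv :: "nat \<Rightarrow> (pt \<Rightarrow> pt) \<Rightarrow> bool" where
  "injv r f \<longleftrightarrow> (\<forall>p q. vpt r p \<longrightarrow> vpt r q \<longrightarrow> f p = f q \<longrightarrow> p = q)"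

definition s01 :: "nat \<Rightarrow> nat" where "s01 = (\<lambda>i. if i = 0 then 0 else 1)"
definition z0 :: "nat \<Rightarrow> nat" where "z0 = (\<lambda>i. 0)"
lemma vs_s01: "r \<ge> 2 \<Longrightarrow> vs r s01" by (simp add: vs_def s01_def)
lemma vs_z0: "r \<ge> 1 \<Longrightarrow> vs r z0" by (simp add: vs_def z0_def)

lemma vpt_cat[simp]: "vpt r (cat c s) \<longleftrightarrow> vcyl r c \<and> vs r s"
  by (simp add: vpt_def cat_def vcyl_def)

lemma cat_det:
  assumes r: "r \<ge> 2" and h: "\<forall>s. vs r s \<longrightarrow> cat c s = cat c' s"
  shows "c = c'"
proof -
  obtain n v where c: "c = (n, v)" by (cases c)
  obtain n' v' where c': "c' = (n', v')" by (cases c')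
  have e: "\<And>s. vs r s \<Longrightarrow> n = n' \<and> pre v s = pre v' s" using h unfolding c c' cat_def by auto
  have nn: "n = n'" using e[OF vs_s01[OF r]] by simp
  have ee: "pre v s01 = pre v' s01" using e[OF vs_s01[OF r]] by simp
  have len: "length v = length v'"
  proof (rule ccontr)
    assume "length v \<noteq> length v'"
    then consider "length v < length v'" | "length v' < length v" by linarith
    then show False
    proof cases
      case 1
      have "pre v s01 (length v') = s01 (length v' - length v)" using 1 by (simp add: pre_def)
      moreover have "pre v' s01 (length v') = s01 0" by (simp add: pre_def)
      ultimately show False using ee 1 by (simp add: s01_def)
    next
      case 2
      have "pre v' s01 (length v) = s01 (length v - length v')" using 2 by (simp add: pre_def)
      moreover have "pre v s01 (length v) = s01 0" by (simp add: pre_def)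
      ultimately show False using ee 2 by (simp add: s01_def)
    qed
  qed
  have "v = v'"
  proof (rule nth_equalityI)
    show "length v = length v'" by (rule len)
    fix i assume "i < length v"
    then show "v ! i = v' ! i" using ee len by (metis pre_lt)
  qed
  then show ?thesis using c c' nn by simp
qed

lemma cimg_eq:
  assumes r: "r \<ge> 2" and h: "\<forall>s. vs r s \<longrightarrow> f (cat c s) = cat c' s"
  shows "cimg r f c = c'"
  unfolding cimg_def
proof (rule the_equality)
  show "\<forall>s. vs r s \<longrightarrow> f (cat c s) = cat c' s" by (rule h)
  fix d assume "\<forall>s. vs r s \<longrightarrow> f (cat c s) = cat d s"
  then have "\<forall>s. vs r s \<longrightarrow> cat d s = cat c' s" using h by auto
  then show "d = c'" using cat_det[OF r] by blast
qed

lemma cimg_spec: "r \<ge> 2 \<Longrightarrow> good r f c \<Longrightarrow> vs r s \<Longrightarrow> f (cat c s) = cat (cimg r f c) s"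
  unfolding good_def using cimg_eq by metis

lemma cimg_valid:
  assumes r: "r \<ge> 2" and g: "good r f c" and v: "vcyl r c" and p: "pres r f"
  shows "vcyl r (cimg r f c)"
proof -
  have z: "vs r z0" using r vs_z0 by simp
  have "vpt r (cat c z0)" using v z by simp
  then have "vpt r (f (cat c z0))" using p unfolding pres_def by blast
  then show ?thesis using cimg_spec[OF r g z] by simp
qed

lemma Bad_cong: "(\<And>p. vpt r p \<Longrightarrow> f p = g p) \<Longrightarrow> Bad r f = Bad r g"
proof -
  assume h: "\<And>p. vpt r p \<Longrightarrow> f p = g p"
  have "good r f c = good r g c" if "vcyl r c" for c
    unfolding good_def using h that by (metis vpt_cat)
  then show ?thesis unfolding Bad_def by blast
qed

lemma cat_append: "cat (n, v @ u) s = cat (n, v) (pre u s)"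
  by (simp add: cat_def pre_append)

lemma good_desc: "good r f (n, v) \<Longrightarrow> \<forall>a\<in>set u. a < r \<Longrightarrow> good r f (n, v @ u)"
  unfolding good_def
proof -
  assume "\<exists>c'. \<forall>s. vs r s \<longrightarrow> f (cat (n, v) s) = cat c' s" and u: "\<forall>a\<in>set u. a < r"
  then obtain c' where h: "\<forall>s. vs r s \<longrightarrow> f (cat (n, v) s) = cat c' s" by blast
  obtain m w where c': "c' = (m, w)" by (cases c')
  have "\<forall>s. vs r s \<longrightarrow> f (cat (n, v @ u) s) = cat (m, w @ u) s"
    using h u by (simp add: cat_append c')
  then show "\<exists>c'. \<forall>s. vs r s \<longrightarrow> f (cat (n, v @ u) s) = cat c' s" by blast
qed

lemma L1:
  assumes r: "r \<ge> 2" and p: "pres r f"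
  shows "Bad r (g \<circ> f) \<subseteq> Bad r f \<union> {c. vcyl r c \<and> good r f c \<and> cimg r f c \<in> Bad r g}"
proof
  fix c assume c: "c \<in> Bad r (g \<circ> f)"
  show "c \<in> Bad r f \<union> {c. vcyl r c \<and> good r f c \<and> cimg r f c \<in> Bad r g}"
  proof (rule ccontr)
    assume n: "c \<notin> Bad r f \<union> {c. vcyl r c \<and> good r f c \<and> cimg r f c \<in> Bad r g}"
    have vc: "vcyl r c" using c by (simp add: Bad_def)
    have gf: "good r f c" using n vc by (simp add: Bad_def)
    have vi: "vcyl r (cimg r f c)" using cimg_valid[OF r gf vc p] .
    have gg: "good r g (cimg r f c)" using n vc gf vi by (simp add: Bad_def)
    then obtain c'' where h: "\<forall>s. vs r s \<longrightarrow> g (cat (cimg r f c) s) = cat c'' s" by (auto simp: good_def)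
    have "\<forall>s. vs r s \<longrightarrow> (g \<circ> f) (cat c s) = cat c'' s" using h cimg_spec[OF r gf] by simp
    then have "good r (g \<circ> f) c" unfolding good_def by blast
    then show False using c by (simp add: Bad_def)
  qed
qed

lemma L2:
  assumes r: "r \<ge> 2" and p: "pres r f" and i: "injv r f" and B: "finite B"
  shows "finite {c. vcyl r c \<and> good r f c \<and> cimg r f c \<in> B} \<and> card {c. vcyl r c \<and> good r f c \<and> cimg r f c \<in> B} \<le> card B"
proof -
  let ?S = "{c. vcyl r c \<and> good r f c \<and> cimg r f c \<in> B}"
  have inj: "inj_on (cimg r f) ?S"
  proof (rule inj_onI)
    fix c1 c2 assume c1: "c1 \<in> ?S" and c2: "c2 \<in> ?S" and e: "cimg r f c1 = cimg r f c2"
    have "\<forall>s. vs r s \<longrightarrow> cat c1 s = cat c2 s"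
    proof (intro allI impI)
      fix s assume s: "vs r s"
      have "f (cat c1 s) = f (cat c2 s)" using cimg_spec[OF r _ s, of f] c1 c2 e by simp
      moreover have "vpt r (cat c1 s)" "vpt r (cat c2 s)" using c1 c2 s by simp_all
      ultimately show "cat c1 s = cat c2 s" using i unfolding injv_def by blast
    qed
    then show "c1 = c2" using cat_det[OF r] by blast
  qed
  have sub: "cimg r f ` ?S \<subseteq> B" by auto
  have f: "finite ?S" using inj sub B by (meson finite_imageD finite_subset)
  have "card ?S \<le> card B" using card_inj_on_le[OF inj sub B] .
  then show ?thesis using f by simp
qed

definition cx :: "nat \<Rightarrow> nat \<Rightarrow> cyl \<Rightarrow> cyl" where
  "cx r k c = (if fst c < k then c else if fst c < k + r then (k, (fst c - k) # snd c) else (fst c - (r - 1), snd c))"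

lemma gen_cat_F: "gen r (k, False) (cat c s) = cat (cx r k c) s"
  by (cases c) (auto simp: cat_def cx_def pre_Cons[symmetric])

lemma pre_Cons_0[simp]: "pre (a # v) s 0 = a" by (simp add: pre_def)
lemma stl_pre_Cons[simp]: "stl (pre (a # v) s) = pre v s" by (simp add: pre_def stl_def fun_eq_iff)

lemma gen_cat_T: "c \<noteq> (k, []) \<Longrightarrow> \<exists>c'. \<forall>s. gen r (k, True) (cat c s) = cat c' s"
proof -
  assume ck: "c \<noteq> (k, [])"
  obtain n v where c: "c = (n, v)" by (cases c)
  show ?thesis
  proof (cases "n = k")
    case True
    then obtain a v' where v: "v = a # v'" using ck c by (cases v) auto
    have "gen r (k, True) (cat c s) = cat (k + a, v') s" for s
      unfolding c v cat_def using True by simp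
    then show ?thesis by blast
  next
    case False
    show ?thesis
    proof (cases "n < k")
      case True
      have "gen r (k, True) (cat c s) = cat (n, v) s" for s
        unfolding c cat_def using True by simp
      then show ?thesis by blast
    next
      case F2: False
      have "gen r (k, True) (cat c s) = cat (n + (r - 1), v) s" for s
        unfolding c cat_def using False F2 by simp
      then show ?thesis by blast
    qed
  qed
qed

lemma Bad_gen_F: "Bad r (gen r (k, False)) = {}"
proof -
  have "good r (gen r (k, False)) c" for c unfolding good_def using gen_cat_F by blast
  then show ?thesis unfolding Bad_def by blast
qed

lemma Bad_gen_T: "Bad r (gen r (k, True)) \<subseteq> {(k, [])}"
proof
  fix c assume c: "c \<in> Bad r (gen r (k, True))"
  show "c \<in> {(k, [])}"
  proof (rule ccontr)
    assume "c \<notin> {(k, [])}"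
    then obtain c' where "\<forall>s. gen r (k, True) (cat c s) = cat c' s" using gen_cat_T by blast
    then have "good r (gen r (k, True)) c" unfolding good_def by blast
    then show False using c unfolding Bad_def by blast
  qed
qed

lemma Bad_gen_card: "finite (Bad r (gen r l)) \<and> card (Bad r (gen r l)) \<le> 1"
proof (cases l)
  case (Pair k b)
  show ?thesis
  proof (cases b)
    case True
    have "Bad r (gen r l) \<subseteq> {(k, [])}" using Bad_gen_T Pair True by simp
    then have "finite (Bad r (gen r l))" by (rule finite_subset) simp
    moreover have "card (Bad r (gen r l)) \<le> card {(k, []::nat list)}"
      using \<open>Bad r (gen r l) \<subseteq> {(k, [])}\<close> by (meson card_mono finite.emptyI finite.insertI)
    ultimately show ?thesis by simp
  next
    case False
    then show ?thesis using Bad_gen_F Pair by simp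
  qed
qed

lemma pres_act: "r \<ge> 1 \<Longrightarrow> pres r (act r w)" by (simp add: pres_def act_valid)
lemma injv_act: "r \<ge> 1 \<Longrightarrow> injv r (act r w)" unfolding injv_def using act_inj by blast

lemma card_Bad_act:
  assumes r: "r \<ge> 2"
  shows "finite (Bad r (act r w)) \<and> card (Bad r (act r w)) \<le> length w"
proof (induction w)
  case Nil
  have "Bad r (act r []) = {}" unfolding Bad_def good_def by auto
  then show ?case by (simp only:) simp
next
  case (Cons l w)
  let ?S = "{c. vcyl r c \<and> good r (act r w) c \<and> cimg r (act r w) c \<in> Bad r (gen r l)}"
  have sub: "Bad r (act r (l # w)) \<subseteq> Bad r (act r w) \<union> ?S"
    using L1[OF r pres_act[of r w]] r by simp
  have p1: "pres r (act r w)" using r pres_act by simp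
  have i1: "injv r (act r w)" using r injv_act by simp
  have S: "finite ?S \<and> card ?S \<le> 1"
    using L2[OF r p1 i1, of "Bad r (gen r l)"] Bad_gen_card[of r l] by simp
  have fin: "finite (Bad r (act r w) \<union> ?S)" using Cons S by simp
  have "card (Bad r (act r (l # w))) \<le> card (Bad r (act r w) \<union> ?S)" using card_mono[OF fin sub] .
  also have "\<dots> \<le> card (Bad r (act r w)) + card ?S" by (rule card_Un_le)
  finally have "card (Bad r (act r (l # w))) \<le> length (l # w)" using Cons S by simp
  moreover have "finite (Bad r (act r (l # w)))" using fin sub by (rule finite_subset[rotated])
  ultimately show ?case by blast
qed

definition tr :: "nat \<Rightarrow> (pt \<Rightarrow> pt) \<Rightarrow> nat \<Rightarrow> int \<Rightarrow> bool" where
  "tr r f M T \<longleftrightarrow> (\<forall>n s. M \<le> n \<longrightarrow> vs r s \<longrightarrow> int n + T \<ge> 0 \<and> f (n, s) = (nat (int n + T), s))"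

lemma tr_gen: "r \<ge> 1 \<Longrightarrow> fst l < K \<Longrightarrow> \<exists>t. tr r (gen r l) (K + r) t"
proof -
  assume r: "r \<ge> 1" and k: "fst l < K"
  obtain k b where l: "l = (k, b)" by (cases l)
  show ?thesis
  proof (cases b)
    case True
    have "tr r (gen r l) (K + r) (int (r - 1))" unfolding tr_def
    proof (intro allI impI)
      fix n s assume n: "K + r \<le> n"
      have "k < n" using n k l by simp
      then have "gen r l (n, s) = (n + (r - 1), s)" using True l by simp
      moreover have "int n + int (r - 1) = int (n + (r - 1))" by simp
      ultimately show "0 \<le> int n + int (r - 1) \<and> gen r l (n, s) = (nat (int n + int (r - 1)), s)"
        by (metis nat_int of_nat_0_le_iff)
    qed
    then show ?thesis by blast
  next
    case False
    have "tr r (gen r l) (K + r) (- int (r - 1))" unfolding tr_def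
    proof (intro allI impI)
      fix n s assume n: "K + r \<le> n"
      have "k + r \<le> n" using n k l by simp
      then have "gen r l (n, s) = (n - (r - 1), s)" using False l by simp
      moreover have "int n + - int (r - 1) = int (n - (r - 1))" using n r by simp
      ultimately show "0 \<le> int n + - int (r - 1) \<and> gen r l (n, s) = (nat (int n + - int (r - 1)), s)"
        by (metis nat_int of_nat_0_le_iff)
    qed
    then show ?thesis by blast
  qed
qed

lemma tr_act:
  assumes r: "r \<ge> 1"
  shows "(\<forall>l\<in>set w. fst l < K) \<Longrightarrow> \<exists>T. tr r (act r w) (length w * (K + r)) T"
proof (induction w)
  case Nil
  have "tr r (act r []) 0 0" by (simp add: tr_def)
  then show ?case by (metis list.size(3) mult_zero_left)
next
  case (Cons l w)
  obtain T where T: "tr r (act r w) (length w * (K + r)) T" using Cons by auto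
  have "fst l < K" using Cons.prems by simp
  then obtain t where t: "tr r (gen r l) (K + r) t" using tr_gen[OF r] by blast
  let ?M = "length w * (K + r)"
  have MT: "int ?M + T \<ge> 0" using T vs_z0[OF r] unfolding tr_def by blast
  have "tr r (act r (l # w)) (length (l # w) * (K + r)) (T + t)"
    unfolding tr_def
  proof (intro allI impI)
    fix n s assume n: "length (l # w) * (K + r) \<le> n" and s: "vs r s"
    have n1: "?M \<le> n" using n by simp
    have a1: "int n + T \<ge> 0" "act r w (n, s) = (nat (int n + T), s)" using T n1 s unfolding tr_def by auto
    have n2: "?M + (K + r) \<le> n" using n by simp
    have "int (K + r) \<le> int n + T" using MT n2 by linarith
    then have "K + r \<le> nat (int n + T)" by (metis nat_int nat_mono)
    then have a2: "int (nat (int n + T)) + t \<ge> 0" "gen r l (nat (int n + T), s) = (nat (int (nat (int n + T)) + t), s)"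
      using t s unfolding tr_def by auto
    show "0 \<le> int n + (T + t) \<and> act r (l # w) (n, s) = (nat (int n + (T + t)), s)"
      using a1 a2 by simp
  qed
  then show ?case by blast
qed

lemma Bad_tr: "tr r f M T \<Longrightarrow> Bad r f \<subseteq> {c. fst c < M}"
proof
  fix c assume t: "tr r f M T" and c: "c \<in> Bad r f"
  show "c \<in> {c. fst c < M}"
  proof (rule ccontr)
    assume "c \<notin> {c. fst c < M}"
    then have M: "M \<le> fst c" by simp
    have vc: "vcyl r c" using c by (simp add: Bad_def)
    have "\<forall>s. vs r s \<longrightarrow> f (cat c s) = cat (nat (int (fst c) + T), snd c) s"
    proof (intro allI impI)
      fix s assume s: "vs r s"
      have "vs r (pre (snd c) s)" using vc s by (simp add: vcyl_def)
      then have "f (fst c, pre (snd c) s) = (nat (int (fst c) + T), pre (snd c) s)"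
        using t[unfolded tr_def, rule_format, OF M] by blast
      then show "f (cat c s) = cat (nat (int (fst c) + T), snd c) s" by (simp add: cat_def)
    qed
    then have "good r f c" unfolding good_def by blast
    then show False using c by (simp add: Bad_def)
  qed
qed

definition mulst :: "nat \<Rightarrow> (nat \<Rightarrow> nat) \<Rightarrow> nat \<Rightarrow> nat" where "mulst d s = (\<lambda>i. d * s i)"
definition emb :: "nat \<Rightarrow> pt \<Rightarrow> pt" where "emb d x = (d * fst x, mulst d (snd x))"
definition embc :: "nat \<Rightarrow> cyl \<Rightarrow> cyl" where "embc d c = (d * fst c, map ((*) d) (snd c))"

lemma j1_Nil[simp]: "j1 d [] = []" by (simp add: j1_def)
lemma j1_Cons[simp]: "j1 d (l # w) = (d * fst l, snd l) # j1 d w" by (cases l) (simp add: j1_def)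
lemma j1_append[simp]: "j1 d (u @ v) = j1 d u @ j1 d v" by (simp add: j1_def)
lemma j1_winv: "j1 d (winv w) = winv (j1 d w)" by (induction w) auto
lemma length_j1[simp]: "length (j1 d w) = length w" by (simp add: j1_def)

lemma pre_mulst: "mulst d (pre v s) = pre (map ((*) d) v) (mulst d s)"
  by (simp add: mulst_def pre_def fun_eq_iff)
lemma stl_mulst: "stl (mulst d s) = mulst d (stl s)" by (simp add: mulst_def stl_def)

locale pq =
  fixes p q d :: nat
  assumes p2: "p \<ge> 2" and q2: "q \<ge> 2" and d0: "d > 0" and pq: "q - 1 = d * (p - 1)"
begin

lemma dp: "d * p = q - 1 + d"
proof -
  have "d * p = d * (p - 1) + d" using p2 by (cases p) auto
  then show ?thesis using pq by simp
qed

lemma vs_mulst: "vs p s \<Longrightarrow> vs q (mulst d s)"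
proof -
  assume s: "vs p s"
  have "d * s i < q" for i
  proof -
    have "s i \<le> p - 1" using s unfolding vs_def by (metis Suc_pred' less_Suc_eq_le less_nat_zero_code not_gr_zero)
    then have "d * s i \<le> d * (p - 1)" by simp
    then show ?thesis using pq q2 by linarith
  qed
  then show ?thesis by (simp add: vs_def mulst_def)
qed

lemma gen_emb:
  assumes x: "vpt p x"
  shows "gen q (d * k, b) (emb d x) = emb d (gen p (k, b) x)"
proof -
  obtain n s where xx: "x = (n, s)" by (cases x)
  have s0: "s 0 < p" using x xx by (simp add: vpt_def vs_def)
  show ?thesis
  proof (cases b)
    case True
    consider "n < k" | "n = k" | "n > k" by linarith
    then show ?thesis
    proof cases
      case 1 then show ?thesis using True d0 by (simp add: xx emb_def)
    next
      case 2 then show ?thesis using True d0 by (simp add: xx emb_def stl_mulst distrib_left) (simp add: mulst_def)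
    next
      case 3
      have "d * n + (q - 1) = d * (n + (p - 1))" using pq by (simp add: distrib_left)
      then show ?thesis using True d0 3 by (simp add: xx emb_def)
    qed
  next
    case False
    consider "n < k" | "k \<le> n" "n < k + p" | "k + p \<le> n" by linarith
    then show ?thesis
    proof cases
      case 1 then show ?thesis using False d0 by (simp add: xx emb_def)
    next
      case 2
      have "d * n < d * k + q"
      proof -
        have "n \<le> k + (p - 1)" using 2 by linarith
        then have "d * n \<le> d * k + d * (p - 1)" by (metis distrib_left mult_le_mono2)
        then show ?thesis using pq q2 by linarith
      qed
      moreover have "d * n - d * k = d * (n - k)" by (simp add: diff_mult_distrib2)
      ultimately show ?thesis using False d0 2 by (simp add: xx emb_def pre_mulst)
    next
      case 3
      have "d * k + q \<le> d * n"
      proof -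
        have "d * (k + p) \<le> d * n" using 3 by simp
        then show ?thesis using dp d0 by (simp add: distrib_left)
      qed
      moreover have "d * n - (q - 1) = d * (n - (p - 1))" using pq by (simp add: diff_mult_distrib2)
      moreover have "\<not> d * n < d * k" using 3 by simp
      ultimately show ?thesis using False d0 3 by (simp add: xx emb_def)
    qed
  qed
qed

lemma vpt_emb: "vpt p x \<Longrightarrow> vpt q (emb d x)"
  by (simp add: vpt_def emb_def vs_mulst)

lemma act_emb: "vpt p x \<Longrightarrow> act q (j1 d w) (emb d x) = emb d (act p w x)"
proof (induction w arbitrary: x)
  case Nil then show ?case by simp
next
  case (Cons l w)
  have v: "vpt p (act p w x)" using act_valid Cons.prems p2 by simp
  have "act q (j1 d (l # w)) (emb d x) = gen q (d * fst l, snd l) (emb d (act p w x))"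
    using Cons by simp
  also have "\<dots> = emb d (gen p (fst l, snd l) (act p w x))" using gen_emb[OF v] by simp
  finally show ?case by simp
qed

lemma emb_cat: "emb d (cat c s) = cat (embc d c) (mulst d s)"
  by (simp add: emb_def cat_def embc_def pre_mulst)

lemma vcyl_embc: "vcyl p c \<Longrightarrow> vcyl q (embc d c)"
proof -
  assume c: "vcyl p c"
  have "\<forall>a\<in>set (snd c). d * a < q"
  proof
    fix a assume "a \<in> set (snd c)"
    then have "a \<le> p - 1" using c unfolding vcyl_def by fastforce
    then have "d * a \<le> d * (p - 1)" by simp
    then show "d * a < q" using pq q2 by linarith
  qed
  then show ?thesis by (auto simp: vcyl_def embc_def)
qed

lemma Bad_emb:
  assumes c: "c \<in> Bad p (act p w)"
  shows "embc d c \<in> Bad q (act q (j1 d w))"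
proof -
  have vc: "vcyl p c" using c by (simp add: Bad_def)
  have ng: "\<not> good p (act p w) c" using c by (simp add: Bad_def)
  have "\<not> good q (act q (j1 d w)) (embc d c)"
  proof
    assume "good q (act q (j1 d w)) (embc d c)"
    then obtain c' where h: "\<forall>t. vs q t \<longrightarrow> act q (j1 d w) (cat (embc d c) t) = cat c' t"
      unfolding good_def by blast
    let ?c2 = "(fst c' div d, map (\<lambda>x. x div d) (snd c'))"
    have "\<forall>s. vs p s \<longrightarrow> act p w (cat c s) = cat ?c2 s"
    proof (intro allI impI)
      fix s assume s: "vs p s"
      have vcs: "vpt p (cat c s)" using vc s by simp
      have "emb d (act p w (cat c s)) = cat c' (mulst d s)"
        using h vs_mulst[OF s] act_emb[OF vcs] emb_cat by metis
      moreover obtain m \<sigma> where ms: "act p w (cat c s) = (m, \<sigma>)" by fastforce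
      ultimately have e1: "d * m = fst c'" and e2: "mulst d \<sigma> = pre (snd c') (mulst d s)"
        by (simp_all add: emb_def cat_def)
      have m: "m = fst c' div d" using e1 d0 by (metis nonzero_mult_div_cancel_left not_less0 gr_implies_not0)
      have "\<sigma> = pre (map (\<lambda>x. x div d) (snd c')) s"
      proof
        fix i
        have "d * \<sigma> i = pre (snd c') (mulst d s) i" using e2 by (metis mulst_def)
        show "\<sigma> i = pre (map (\<lambda>x. x div d) (snd c')) s i"
        proof (cases "i < length (snd c')")
          case True
          then have "d * \<sigma> i = snd c' ! i" using \<open>d * \<sigma> i = _\<close> by (simp add: pre_def)
          then have "\<sigma> i = snd c' ! i div d" using d0 by (metis nonzero_mult_div_cancel_left not_less0 gr_implies_not0)
          then show ?thesis using True by (simp add: pre_def)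
        next
          case False
          then have "d * \<sigma> i = d * s (i - length (snd c'))" using \<open>d * \<sigma> i = _\<close> by (simp add: pre_def mulst_def)
          then show ?thesis using False d0 by (simp add: pre_def)
        qed
      qed
      then show "act p w (cat c s) = cat ?c2 s" using ms m by (simp add: cat_def)
    qed
    then have "good p (act p w) c" unfolding good_def by blast
    then show False using ng by simp
  qed
  then show ?thesis using vcyl_embc[OF vc] by (simp add: Bad_def)
qed

lemma inj_embc: "inj (embc d)"
proof (rule injI)
  fix x y assume "embc d x = embc d y"
  then have "d * fst x = d * fst y" "map ((*) d) (snd x) = map ((*) d) (snd y)" by (simp_all add: embc_def)
  moreover have "inj ((*) d)" using d0 by (simp add: inj_on_def)
  ultimately have "fst x = fst y" "snd x = snd y" using d0 by (simp_all add: inj_map_eq_map)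
  then show "x = y" by (simp add: prod_eq_iff)
qed

lemma Bad_emb_card:
  assumes f: "finite (Bad q (act q (j1 d w)))"
  shows "finite (Bad p (act p w)) \<and> card (Bad p (act p w)) \<le> card (Bad q (act q (j1 d w)))"
proof -
  have sub: "embc d ` Bad p (act p w) \<subseteq> Bad q (act q (j1 d w))" using Bad_emb by blast
  have inj: "inj_on (embc d) (Bad p (act p w))" using inj_embc by (meson inj_on_subset subset_UNIV)
  have "finite (Bad p (act p w))" using sub f inj by (meson finite_imageD finite_subset)
  moreover have "card (Bad p (act p w)) \<le> card (Bad q (act q (j1 d w)))"
    using card_inj_on_le[OF inj sub f] .
  ultimately show ?thesis by blast
qed

lemma Bad_emb_tree:
  assumes f: "Bad q (act q (j1 d w)) \<subseteq> {c. fst c < M}"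
  shows "Bad p (act p w) \<subseteq> {c. fst c < M}"
proof
  fix c assume "c \<in> Bad p (act p w)"
  then have "embc d c \<in> {c. fst c < M}" using Bad_emb f by blast
  then have "d * fst c < M" by (simp add: embc_def)
  moreover have "fst c \<le> d * fst c" using d0 by simp
  ultimately have "fst c < M" by linarith
  then show "c \<in> {c. fst c < M}" by simp
qed

end

definition leaf :: "nat \<Rightarrow> cyl set \<Rightarrow> cyl \<Rightarrow> bool" where
  "leaf r F l \<longleftrightarrow> vcyl r l \<and> l \<notin> F \<and> (snd l = [] \<or> (fst l, butlast (snd l)) \<in> F)"
definition pw :: "nat list \<Rightarrow> letter list" where "pw xs = map (\<lambda>i. (i, False)) xs"
definition Leafmap :: "nat \<Rightarrow> letter list \<Rightarrow> cyl set \<Rightarrow> bool" where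
  "Leafmap r N F \<longleftrightarrow> (\<forall>n. \<exists>l. leaf r F l \<and> (\<forall>s. vs r s \<longrightarrow> act r N (n, s) = cat l s))
     \<and> (\<forall>l. leaf r F l \<longrightarrow> (\<exists>n. \<forall>s. vs r s \<longrightarrow> act r N (n, s) = cat l s))"
definition upcl :: "cyl set \<Rightarrow> bool" where
  "upcl F \<longleftrightarrow> (\<forall>c\<in>F. snd c \<noteq> [] \<longrightarrow> (fst c, butlast (snd c)) \<in> F)"

lemma pw_Nil[simp]: "pw [] = []" by (simp add: pw_def)
lemma pw_Cons[simp]: "pw (i # xs) = (i, False) # pw xs" by (simp add: pw_def)
lemma pw_append[simp]: "pw (xs @ ys) = pw xs @ pw ys" by (simp add: pw_def)
lemma length_pw[simp]: "length (pw xs) = length xs" by (simp add: pw_def)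

lemma same_tree:
  assumes r: "r \<ge> 2"
    and a: "\<forall>s. vs r s \<longrightarrow> act r N (n, s) = cat l s" and b: "\<forall>s. vs r s \<longrightarrow> act r N (m, s) = cat l s"
  shows "n = m"
proof -
  have z: "vs r z0" using r vs_z0 by simp
  have "act r N (n, z0) = act r N (m, z0)" using a b z by simp
  then have "(n, z0) = (m, z0)" using act_inj[of r "(n, z0)" "(m, z0)" N] r z by (simp add: vpt_def)
  then show ?thesis by simp
qed

lemma cat_eq_cyl:
  assumes r: "r \<ge> 2"
    and a: "\<forall>s. vs r s \<longrightarrow> act r N (n, s) = cat l s" and b: "\<forall>s. vs r s \<longrightarrow> act r N (n, s) = cat l' s"
  shows "l = l'"
  using cat_det[OF r] a b by metis

lemma construct:
  assumes r: "r \<ge> 2"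
  shows "\<forall>F. finite F \<longrightarrow> card F = k \<longrightarrow> F \<subseteq> {c. vcyl r c} \<longrightarrow> upcl F \<longrightarrow>
     (\<exists>N. length N = card F \<and> Leafmap r (pw N) F)"
proof (induction k)
  case 0
  show ?case
  proof (intro allI impI)
    fix F :: "cyl set" assume "finite F" "card F = 0"
    then have F: "F = {}" by simp
    have "Leafmap r (pw []) F"
      unfolding Leafmap_def leaf_def F
    proof (intro conjI allI impI)
      fix n
      show "\<exists>l. (vcyl r l \<and> l \<notin> {} \<and> (snd l = [] \<or> (fst l, butlast (snd l)) \<in> {})) \<and>
               (\<forall>s. vs r s \<longrightarrow> act r (pw []) (n, s) = cat l s)"
        by (rule exI[of _ "(n, [])"]) (simp add: vcyl_def cat_def)
    next
      fix l :: cyl assume "vcyl r l \<and> l \<notin> {} \<and> (snd l = [] \<or> (fst l, butlast (snd l)) \<in> {})"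
      then have "snd l = []" by simp
      then show "\<exists>n. \<forall>s. vs r s \<longrightarrow> act r (pw []) (n, s) = cat l s"
        by (intro exI[of _ "fst l"]) (simp add: cat_def)
    qed
    then show "\<exists>N. length N = card F \<and> Leafmap r (pw N) F" using F by (intro exI[of _ "[]"]) simp
  qed
next
  case (Suc k)
  show ?case
  proof (intro allI impI)
    fix F :: "cyl set" assume fin: "finite F" and cF: "card F = Suc k" and vF: "F \<subseteq> {c. vcyl r c}" and up: "upcl F"
    have ne: "F \<noteq> {}" using cF by auto
    define m where "m = Max ((\<lambda>c. length (snd c)) ` F)"
    have "m \<in> (\<lambda>c. length (snd c)) ` F" unfolding m_def using fin ne by simp
    then obtain c where cF1: "c \<in> F" and cm: "length (snd c) = m" by auto
    have maxc: "\<And>c'. c' \<in> F \<Longrightarrow> length (snd c') \<le> length (snd c)"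
      unfolding cm m_def using fin by simp
    define F' where "F' = F - {c}"
    have fin': "finite F'" using fin F'_def by simp
    have cF': "card F' = k" using cF cF1 fin F'_def by simp
    have vF': "F' \<subseteq> {c. vcyl r c}" using vF F'_def by auto
    have up': "upcl F'" unfolding upcl_def
    proof (intro ballI impI)
      fix c' assume c': "c' \<in> F'" and ne': "snd c' \<noteq> []"
      have "(fst c', butlast (snd c')) \<in> F" using up c' ne' F'_def unfolding upcl_def by blast
      moreover have "(fst c', butlast (snd c')) \<noteq> c"
      proof
        assume "(fst c', butlast (snd c')) = c"
        then have "length (snd c) = length (snd c') - 1" by auto
        moreover have "length (snd c') \<le> length (snd c)" using maxc c' F'_def by blast
        ultimately show False using ne' by (cases "snd c'") auto
      qed
      ultimately show "(fst c', butlast (snd c')) \<in> F'" using F'_def by blast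
    qed
    obtain N' where lenN': "length N' = card F'" and LM: "Leafmap r (pw N') F'"
      using Suc.IH fin' cF' vF' up' by blast
    have vc: "vcyl r c" using vF cF1 by auto
    have cleaf: "leaf r F' c"
    proof -
      have "snd c = [] \<or> (fst c, butlast (snd c)) \<in> F'"
      proof (cases "snd c = []")
        case False
        have "(fst c, butlast (snd c)) \<in> F" using up cF1 False unfolding upcl_def by blast
        moreover have "(fst c, butlast (snd c)) \<noteq> c"
        proof
          assume "(fst c, butlast (snd c)) = c"
          then have "length (butlast (snd c)) = length (snd c)" by (metis snd_conv)
          moreover have "length (butlast (snd c)) < length (snd c)" using False by (metis length_butlast diff_less length_greater_0_conv zero_less_one)
          ultimately show False by linarith
        qed
        ultimately show ?thesis using F'_def by blast
      qed simp
      then show ?thesis unfolding leaf_def using vc F'_def by simp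
    qed
    obtain j where jc: "\<forall>s. vs r s \<longrightarrow> act r (pw N') (j, s) = cat c s" using LM cleaf unfolding Leafmap_def by blast
    let ?N = "N' @ [j]"
    have actN: "act r (pw ?N) = act r (pw N') \<circ> gen r (j, False)" by simp
    have r1: "r \<ge> 1" using r by simp
    have notc: "l \<noteq> c" if "\<forall>s. vs r s \<longrightarrow> act r (pw N') (n, s) = cat l s" "n \<noteq> j" for l n
    proof
      assume "l = c"
      then have "n = j" using same_tree[OF r that(1)] jc by simp
      then show False using that(2) by simp
    qed
    have leafF: "leaf r F l" if "leaf r F' l" "l \<noteq> c" for l
      using that unfolding leaf_def F'_def by auto
    have part1: "\<exists>l. leaf r F l \<and> (\<forall>s. vs r s \<longrightarrow> act r (pw ?N) (n, s) = cat l s)" for n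
    proof -
      consider "n < j" | "j \<le> n" "n < j + r" | "j + r \<le> n" by linarith
      then show ?thesis
      proof cases
        case 1
        obtain l where l: "leaf r F' l" "\<forall>s. vs r s \<longrightarrow> act r (pw N') (n, s) = cat l s"
          using LM unfolding Leafmap_def by blast
        have "l \<noteq> c" using notc[OF l(2)] 1 by simp
        then have "leaf r F l" using leafF l by simp
        moreover have "\<forall>s. vs r s \<longrightarrow> act r (pw ?N) (n, s) = cat l s" using l 1 by simp
        ultimately show ?thesis by blast
      next
        case 2
        let ?l = "(fst c, snd c @ [n - j])"
        have "n - j < r" using 2 by linarith
        then have vl: "vcyl r ?l" using vc by (simp add: vcyl_def)
        have "?l \<notin> F" using maxc by fastforce
        then have "leaf r F ?l" using vl cF1 by (simp add: leaf_def)
        moreover have "\<forall>s. vs r s \<longrightarrow> act r (pw ?N) (n, s) = cat ?l s"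
        proof (intro allI impI)
          fix s assume s: "vs r s"
          have "act r (pw ?N) (n, s) = act r (pw N') (j, pre [n - j] s)" using 2 by simp
          also have "\<dots> = cat c (pre [n - j] s)" using jc s \<open>n - j < r\<close> by simp
          also have "\<dots> = cat ?l s" using cat_append[of "fst c" "snd c" "[n - j]" s] by simp
          finally show "act r (pw ?N) (n, s) = cat ?l s" .
        qed
        ultimately show ?thesis by blast
      next
        case 3
        obtain l where l: "leaf r F' l" "\<forall>s. vs r s \<longrightarrow> act r (pw N') (n - (r - 1), s) = cat l s"
          using LM unfolding Leafmap_def by blast
        have "n - (r - 1) \<noteq> j" using 3 r by linarith
        then have "l \<noteq> c" using notc[OF l(2)] by simp
        then have "leaf r F l" using leafF l by simp
        moreover have "\<forall>s. vs r s \<longrightarrow> act r (pw ?N) (n, s) = cat l s" using l 3 by simp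
        ultimately show ?thesis by blast
      qed
    qed
    have part2: "\<exists>n. \<forall>s. vs r s \<longrightarrow> act r (pw ?N) (n, s) = cat l s" if lF: "leaf r F l" for l
    proof (cases "snd l \<noteq> [] \<and> (fst l, butlast (snd l)) = c")
      case True
      define a where "a = last (snd l)"
      have la: "l = (fst c, snd c @ [a])" using True unfolding a_def
        by (cases l) (auto simp: append_butlast_last_id)
      have "a \<in> set (snd l)" using True a_def by simp
      then have ar: "a < r" using lF unfolding leaf_def vcyl_def by blast
      have "\<forall>s. vs r s \<longrightarrow> act r (pw ?N) (j + a, s) = cat l s"
      proof (intro allI impI)
        fix s assume s: "vs r s"
        have "act r (pw ?N) (j + a, s) = act r (pw N') (j, pre [a] s)" using ar by simp
        also have "\<dots> = cat c (pre [a] s)" using jc s ar by simp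
        also have "\<dots> = cat l s" using cat_append[of "fst c" "snd c" "[a]" s] la by simp
        finally show "act r (pw ?N) (j + a, s) = cat l s" .
      qed
      then show ?thesis by blast
    next
      case False
      have "leaf r F' l"
      proof -
        have "l \<notin> F'" using lF F'_def unfolding leaf_def by simp
        moreover have "snd l = [] \<or> (fst l, butlast (snd l)) \<in> F'" using lF False F'_def unfolding leaf_def by auto
        ultimately show ?thesis using lF unfolding leaf_def by simp
      qed
      then obtain n' where n': "\<forall>s. vs r s \<longrightarrow> act r (pw N') (n', s) = cat l s" using LM unfolding Leafmap_def by blast
      have "n' \<noteq> j"
      proof
        assume "n' = j"
        then have "l = c" using cat_eq_cyl[OF r n'] jc by simp
        then show False using lF cF1 unfolding leaf_def by simp
      qed
      show ?thesis
      proof (cases "n' < j")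
        case True
        then have "\<forall>s. vs r s \<longrightarrow> act r (pw ?N) (n', s) = cat l s" using n' by simp
        then show ?thesis by blast
      next
        case False
        then have "j + r \<le> n' + (r - 1)" using \<open>n' \<noteq> j\<close> r by linarith
        then have "\<forall>s. vs r s \<longrightarrow> act r (pw ?N) (n' + (r - 1), s) = cat l s" using n' by simp
        then show ?thesis by blast
      qed
    qed
    have "Leafmap r (pw ?N) F" unfolding Leafmap_def using part1 part2 by blast
    moreover have "length ?N = card F" using lenN' cF cF' by simp
    ultimately show "\<exists>N. length N = card F \<and> Leafmap r (pw N) F" by blast
  qed
qed

lemma Bad_inv_leaf:
  assumes r: "r \<ge> 2" and LM: "Leafmap r (pw N) F"
  shows "Bad r (act r (winv (pw N))) \<subseteq> F"
proof
  fix c assume cB: "c \<in> Bad r (act r (winv (pw N)))"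
  show "c \<in> F"
  proof (rule ccontr)
    assume cF: "c \<notin> F"
    obtain n0 v where c: "c = (n0, v)" by (cases c)
    have vc: "vcyl r c" using cB by (simp add: Bad_def)
    define k0 where "k0 = (LEAST k. k \<le> length v \<and> (n0, take k v) \<notin> F)"
    have ex: "length v \<le> length v \<and> (n0, take (length v) v) \<notin> F" using cF c by simp
    have k0: "k0 \<le> length v \<and> (n0, take k0 v) \<notin> F" unfolding k0_def by (rule LeastI[of "\<lambda>k. k \<le> length v \<and> (n0, take k v) \<notin> F", OF ex])
    have k0min: "\<And>k. k < k0 \<Longrightarrow> (n0, take k v) \<in> F"
    proof -
      fix k assume "k < k0"
      then have "\<not> (k \<le> length v \<and> (n0, take k v) \<notin> F)" unfolding k0_def by (rule not_less_Least)
      then show "(n0, take k v) \<in> F" using \<open>k < k0\<close> k0 by simp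
    qed
    let ?a = "(n0, take k0 v)"
    have "leaf r F ?a"
    proof -
      have "vcyl r ?a" using vc c by (auto simp: vcyl_def dest: in_set_takeD)
      moreover have "take k0 v = [] \<or> (n0, butlast (take k0 v)) \<in> F"
      proof (cases "k0 = 0")
        case False
        have "butlast (take k0 v) = take (k0 - 1) v" using k0 by (simp add: butlast_take butlast_conv_take)
        then show ?thesis using k0min[of "k0 - 1"] False by simp
      qed simp
      ultimately show ?thesis using k0 unfolding leaf_def by simp
    qed
    then obtain n where n: "\<forall>s. vs r s \<longrightarrow> act r (pw N) (n, s) = cat ?a s" using LM unfolding Leafmap_def by blast
    have "\<forall>s. vs r s \<longrightarrow> act r (winv (pw N)) (cat c s) = cat (n, drop k0 v) s"
    proof (intro allI impI)
      fix s assume s: "vs r s"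
      have vd: "vs r (pre (drop k0 v) s)" using vc c s by (auto simp: vcyl_def dest: in_set_dropD)
      have "cat c s = cat ?a (pre (drop k0 v) s)"
        using cat_append[of n0 "take k0 v" "drop k0 v" s] c by simp
      also have "\<dots> = act r (pw N) (n, pre (drop k0 v) s)" using n vd by simp
      finally have "act r (winv (pw N)) (cat c s) = (n, pre (drop k0 v) s)"
        using act_winv[of r "(n, pre (drop k0 v) s)" "pw N"] vd r by (simp add: vpt_def)
      then show "act r (winv (pw N)) (cat c s) = cat (n, drop k0 v) s" by (simp add: cat_def)
    qed
    then have "good r (act r (winv (pw N))) c" unfolding good_def by blast
    then show False using cB by (simp add: Bad_def)
  qed
qed

lemma Bad_pos: "r \<ge> 2 \<Longrightarrow> Bad r (act r (pw N)) = {}"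
proof (induction N)
  case Nil
  have "good r (act r (pw [])) c" for c unfolding good_def by (intro exI[of _ c]) simp
  then show ?case unfolding Bad_def by blast
next
  case (Cons i N)
  have "Bad r (act r (pw (i # N))) \<subseteq> Bad r (act r (pw N)) \<union>
     {c. vcyl r c \<and> good r (act r (pw N)) c \<and> cimg r (act r (pw N)) c \<in> Bad r (gen r (i, False))}"
    using L1[of r "act r (pw N)" "gen r (i, False)"] Cons.prems pres_act by simp
  then show ?case using Cons.IH[OF Cons.prems] Bad_gen_F[of r i] by blast
qed

lemma upcl_Bad: "upcl (Bad r f)"
  unfolding upcl_def
proof (intro ballI impI)
  fix c assume c: "c \<in> Bad r f" and ne: "snd c \<noteq> []"
  show "(fst c, butlast (snd c)) \<in> Bad r f"
  proof (rule ccontr)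
    assume "(fst c, butlast (snd c)) \<notin> Bad r f"
    moreover have "vcyl r (fst c, butlast (snd c))" using c by (auto simp: Bad_def vcyl_def dest: in_set_butlastD)
    ultimately have g: "good r f (fst c, butlast (snd c))" by (simp add: Bad_def)
    have "\<forall>a\<in>set [last (snd c)]. a < r" using c ne by (auto simp: Bad_def vcyl_def)
    then have "good r f (fst c, butlast (snd c) @ [last (snd c)])" using good_desc[OF g] by blast
    then have "good r f c" using ne by (simp add: append_butlast_last_id)
    then show False using c by (simp add: Bad_def)
  qed
qed

definition slt :: "(nat \<Rightarrow> nat) \<Rightarrow> (nat \<Rightarrow> nat) \<Rightarrow> bool" where
  "slt s t \<longleftrightarrow> (\<exists>i. (\<forall>j<i. s j = t j) \<and> s i < t i)"
definition plt :: "pt \<Rightarrow> pt \<Rightarrow> bool" where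
  "plt x y \<longleftrightarrow> fst x < fst y \<or> (fst x = fst y \<and> slt (snd x) (snd y))"

lemma slt_unfold: "slt s t \<longleftrightarrow> s 0 < t 0 \<or> (s 0 = t 0 \<and> slt (stl s) (stl t))"
proof
  assume "slt s t"
  then obtain i where i: "\<forall>j<i. s j = t j" "s i < t i" unfolding slt_def by blast
  show "s 0 < t 0 \<or> (s 0 = t 0 \<and> slt (stl s) (stl t))"
  proof (cases i)
    case 0 then show ?thesis using i by simp
  next
    case (Suc i')
    have "s 0 = t 0" using i Suc by simp
    moreover have "slt (stl s) (stl t)" unfolding slt_def stl_def
      using i Suc by (intro exI[of _ i']) auto
    ultimately show ?thesis by simp
  qed
next
  assume h: "s 0 < t 0 \<or> (s 0 = t 0 \<and> slt (stl s) (stl t))"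
  show "slt s t"
  proof (cases "s 0 < t 0")
    case True then show ?thesis unfolding slt_def by (intro exI[of _ 0]) simp
  next
    case False
    then have "s 0 = t 0" "slt (stl s) (stl t)" using h by auto
    then obtain i where i: "\<forall>j<i. s (Suc j) = t (Suc j)" "s (Suc i) < t (Suc i)" unfolding slt_def stl_def by blast
    have "\<forall>j<Suc i. s j = t j" using i \<open>s 0 = t 0\<close> by (auto simp: less_Suc_eq_0_disj)
    then show ?thesis unfolding slt_def using i by blast
  qed
qed

lemma slt_pre1: "slt (pre [a] s) (pre [b] t) \<longleftrightarrow> a < b \<or> (a = b \<and> slt s t)"
  using slt_unfold[of "pre [a] s" "pre [b] t"] by simp

lemma slt_irrefl: "\<not> slt s s" by (simp add: slt_def)

lemma gen_mono:
  assumes r: "r \<ge> 1" and x: "vpt r x" and y: "vpt r y" and xy: "plt x y"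
  shows "plt (gen r l x) (gen r l y)"
proof -
  obtain n s where xx: "x = (n, s)" by (cases x)
  obtain m t where yy: "y = (m, t)" by (cases y)
  obtain k b where l: "l = (k, b)" by (cases l)
  have s0: "s 0 < r" using x xx by (simp add: vpt_def vs_def)
  have t0: "t 0 < r" using y yy by (simp add: vpt_def vs_def)
  have c: "n < m \<or> (n = m \<and> slt s t)" using xy xx yy by (simp add: plt_def)
  show ?thesis
  proof (cases b)
    case False
    consider (lt) "n < m" | (eq) "n = m" "slt s t" using c by blast
    then show ?thesis
    proof cases
      case lt
      consider "m < k" | "n < k" "k \<le> m" | "k \<le> n" "m < k + r" | "k \<le> n" "n < k + r" "k + r \<le> m" | "k + r \<le> n"
        by linarith
      then show ?thesis
      proof cases
        case 1 then show ?thesis using lt False by (simp add: xx yy l plt_def)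
      next
        case 2
        have "fst (gen r (k, False) (m, t)) \<ge> k"
        proof (cases "m < k + r")
          case True then show ?thesis using 2 by simp
        next
          case False
          then have "k \<le> m - (r - 1)" by linarith
          then show ?thesis using 2 False by simp
        qed
        then show ?thesis using lt False 2 by (simp add: xx yy l plt_def)
      next
        case 3
        have "n - k < m - k" using 3 lt by linarith
        then show ?thesis using lt False 3 by (simp add: xx yy l plt_def slt_pre1)
      next
        case 4
        have "m - (r - 1) > k" using 4 by linarith
        then show ?thesis using lt False 4 by (simp add: xx yy l plt_def)
      next
        case 5
        have "n - (r - 1) < m - (r - 1)" using 5 lt by linarith
        then show ?thesis using lt False 5 by (simp add: xx yy l plt_def)
      qed
    next
      case eq
      then show ?thesis using False by (simp add: xx yy l plt_def slt_pre1)
    qed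
  next
    case True
    consider (lt) "n < m" | (eq) "n = m" "slt s t" using c by blast
    then show ?thesis
    proof cases
      case lt
      consider "m < k" | "n < k" "k \<le> m" | "n = k" | "k < n" by linarith
      then show ?thesis
      proof cases
        case 1 then show ?thesis using lt True by (simp add: xx yy l plt_def)
      next
        case 2
        have "fst (gen r (k, True) (m, t)) \<ge> k" using 2 by simp
        then show ?thesis using lt True 2 by (simp add: xx yy l plt_def)
      next
        case 3
        have "k + s 0 < m + (r - 1)" using 3 lt s0 by linarith
        then show ?thesis using lt True 3 by (simp add: xx yy l plt_def)
      next
        case 4 then show ?thesis using lt True by (simp add: xx yy l plt_def)
      qed
    next
      case eq
      then show ?thesis using True slt_unfold[of s t] by (auto simp: xx yy l plt_def)
    qed
  qed
qed

lemma act_mono: "r \<ge> 1 \<Longrightarrow> vpt r x \<Longrightarrow> vpt r y \<Longrightarrow> plt x y \<Longrightarrow> plt (act r w x) (act r w y)"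
proof (induction w)
  case Nil then show ?case by simp
next
  case (Cons l w)
  then show ?case using gen_mono act_valid by simp
qed

lemma smono_surj_id:
  assumes sm: "\<And>a b. a < b \<Longrightarrow> \<sigma> a < (\<sigma> b :: nat)" and su: "\<And>n. \<exists>k. \<sigma> k = n"
  shows "\<sigma> n = n"
proof (induction n rule: less_induct)
  case (less n)
  obtain k where k: "\<sigma> k = n" using su by blast
  have "\<not> k < n"
  proof
    assume "k < n"
    then have "\<sigma> k = k" using less by simp
    then show False using k \<open>k < n\<close> by simp
  qed
  then have "n \<le> k" by simp
  then have "\<sigma> n \<le> \<sigma> k"
  proof (cases "n = k")
    case False
    then have "n < k" using \<open>n \<le> k\<close> by simp
    then show ?thesis using sm[of n k] by simp
  qed simp
  moreover have "n \<le> \<sigma> n"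
  proof -
    have "strict_mono \<sigma>" using sm by (simp add: strict_mono_def)
    then show ?thesis by (rule strict_mono_imp_increasing)
  qed
  ultimately show ?case using k by simp
qed

lemma identity_lemma:
  assumes r: "r \<ge> 2"
    and LD: "Leafmap r (pw ND) (Bad r (act r G))"
    and LR: "Leafmap r (pw NR) (Bad r (act r (winv G)))"
  shows "\<forall>x. vpt r x \<longrightarrow> act r (winv (pw NR) @ G @ pw ND) x = x"
proof -
  have r1: "r \<ge> 1" using r by simp
  let ?W = "winv (pw NR) @ G @ pw ND"
  let ?H = "act r ?W"
  let ?f = "act r G"
  let ?fi = "act r (winv G)"
  have stepA: "\<exists>n'. \<forall>s. vs r s \<longrightarrow> ?H (n, s) = (n', s)" for n
  proof -
    obtain l where lD: "leaf r (Bad r ?f) l" and ll: "\<forall>s. vs r s \<longrightarrow> act r (pw ND) (n, s) = cat l s"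
      using LD unfolding Leafmap_def by blast
    have vl: "vcyl r l" using lD by (simp add: leaf_def)
    have gl: "good r ?f l" using lD by (simp add: leaf_def Bad_def)
    define m where "m = cimg r ?f l"
    have fm: "\<forall>s. vs r s \<longrightarrow> ?f (cat l s) = cat m s" using cimg_spec[OF r gl] m_def by simp
    have vm: "vcyl r m" using cimg_valid[OF r gl vl pres_act[OF r1]] m_def by simp
    have fim: "\<forall>s. vs r s \<longrightarrow> ?fi (cat m s) = cat l s"
    proof (intro allI impI)
      fix s assume s: "vs r s"
      have "?fi (cat m s) = ?fi (?f (cat l s))" using fm s by simp
      also have "\<dots> = cat l s" using act_winv[OF r1] vl s by simp
      finally show "?fi (cat m s) = cat l s" .
    qed
    have mleaf: "leaf r (Bad r ?fi) m"
    proof -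
      have gm: "good r ?fi m" unfolding good_def using fim by blast
      have "snd m = [] \<or> (fst m, butlast (snd m)) \<in> Bad r ?fi"
      proof (rule ccontr)
        assume "\<not> (snd m = [] \<or> (fst m, butlast (snd m)) \<in> Bad r ?fi)"
        then have ne: "snd m \<noteq> []" and pn: "(fst m, butlast (snd m)) \<notin> Bad r ?fi" by auto
        let ?pm = "(fst m, butlast (snd m))"
        have "vcyl r ?pm" using vm by (auto simp: vcyl_def dest: in_set_butlastD)
        then have gpm: "good r ?fi ?pm" using pn by (simp add: Bad_def)
        then obtain C where C: "\<forall>s. vs r s \<longrightarrow> ?fi (cat ?pm s) = cat C s" unfolding good_def by blast
        define a where "a = last (snd m)"
        have ma: "m = (fst m, butlast (snd m) @ [a])" using ne a_def by (simp add: append_butlast_last_id)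
        have ar: "a < r" using vm ne a_def by (simp add: vcyl_def)
        have "\<forall>s. vs r s \<longrightarrow> cat l s = cat (fst C, snd C @ [a]) s"
        proof (intro allI impI)
          fix s assume s: "vs r s"
          have vs1: "vs r (pre [a] s)" using s ar by simp
          have "cat l s = ?fi (cat m s)" using fim s by simp
          also have "\<dots> = ?fi (cat ?pm (pre [a] s))" using cat_append[of "fst m" "butlast (snd m)" "[a]" s] ma by metis
          also have "\<dots> = cat C (pre [a] s)" using C vs1 by simp
          also have "\<dots> = cat (fst C, snd C @ [a]) s" using cat_append[of "fst C" "snd C" "[a]" s] by simp
          finally show "cat l s = cat (fst C, snd C @ [a]) s" .
        qed
        then have lC: "l = (fst C, snd C @ [a])" using cat_det[OF r] by blast
        then have "(fst l, butlast (snd l)) = C" by simp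
        moreover have "(fst l, butlast (snd l)) \<in> Bad r ?f" using lD lC unfolding leaf_def by auto
        moreover have "good r ?f C"
        proof -
          have "\<forall>s. vs r s \<longrightarrow> ?f (cat C s) = cat ?pm s"
          proof (intro allI impI)
            fix s assume s: "vs r s"
            have vp: "vcyl r ?pm" using \<open>vcyl r ?pm\<close> .
            have "?f (cat C s) = ?f (?fi (cat ?pm s))" using C s by simp
            also have "\<dots> = cat ?pm s" using act_winv2[OF r1, of "cat ?pm s" G] vp s by simp
            finally show "?f (cat C s) = cat ?pm s" .
          qed
          then show ?thesis unfolding good_def by blast
        qed
        ultimately show False by (simp add: Bad_def)
      qed
      moreover have "m \<notin> Bad r ?fi" using gm by (simp add: Bad_def)
      ultimately show ?thesis using vm by (simp add: leaf_def)
    qed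
    obtain n' where n': "\<forall>s. vs r s \<longrightarrow> act r (pw NR) (n', s) = cat m s" using LR mleaf unfolding Leafmap_def by blast
    have "\<forall>s. vs r s \<longrightarrow> ?H (n, s) = (n', s)"
    proof (intro allI impI)
      fix s assume s: "vs r s"
      have "?H (n, s) = act r (winv (pw NR)) (?f (act r (pw ND) (n, s)))" by simp
      also have "\<dots> = act r (winv (pw NR)) (cat m s)" using ll fm s by simp
      also have "\<dots> = act r (winv (pw NR)) (act r (pw NR) (n', s))" using n' s by simp
      also have "\<dots> = (n', s)" using act_winv[OF r1, of "(n', s)"] s by (simp add: vpt_def)
      finally show "?H (n, s) = (n', s)" .
    qed
    then show ?thesis by blast
  qed
  define \<sigma> where "\<sigma> n = (SOME n'. \<forall>s. vs r s \<longrightarrow> ?H (n, s) = (n', s))" for n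
  have sig: "\<forall>s. vs r s \<longrightarrow> ?H (n, s) = (\<sigma> n, s)" for n
    unfolding \<sigma>_def using someI_ex[OF stepA] by blast
  have z: "vs r z0" using vs_z0 r1 .
  have sm: "\<sigma> a < \<sigma> b" if ab: "a < b" for a b
  proof -
    have "plt (a, z0) (b, z0)" using ab by (simp add: plt_def)
    moreover have "vpt r (a, z0)" "vpt r (b, z0)" using z by (simp_all add: vpt_def)
    ultimately have "plt (?H (a, z0)) (?H (b, z0))" using act_mono[OF r1] by blast
    then have "plt (\<sigma> a, z0) (\<sigma> b, z0)" using sig z by simp
    then show ?thesis by (simp add: plt_def slt_irrefl)
  qed
  have su: "\<exists>k. \<sigma> k = n'" for n'
  proof -
    obtain m s' where ms: "act r (winv ?W) (n', z0) = (m, s')" by fastforce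
    have "vpt r (m, s')" using act_valid[OF r1, of "(n', z0)" "winv ?W"] ms z by (simp add: vpt_def)
    then have vs': "vs r s'" by (simp add: vpt_def)
    have "?H (m, s') = (n', z0)" using act_winv2[OF r1, of "(n', z0)" ?W] ms z by (simp add: vpt_def)
    then have "\<sigma> m = n'" using sig vs' by simp
    then show ?thesis by blast
  qed
  have "\<sigma> n = n" for n using smono_surj_id[of \<sigma>, OF sm su] by blast
  then show ?thesis using sig by (auto simp: vpt_def)
qed

lemma relF: "i < j \<Longrightarrow> fr_eq r [(i, True), (j, False), (i, False)] [(j + r - 1, False)]"
  using fr_eq.rel[of i j r "[]" "[]"] by simp

lemma relT: "i < j \<Longrightarrow> fr_eq r [(i, True), (j, True), (i, False)] [(j + r - 1, True)]"
  using fr_winv[OF relF[of i j r]] by simp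

lemma ins_cancel: "fr_eq r (x @ y) (x @ [(i, b), (i, \<not> b)] @ y)"
  by (rule fr_eq.sym) (rule fr_eq.cancel)

lemma rel1: "k < i \<Longrightarrow> fr_eq r [(k, True), (i, False)] [(i + r - 1, False), (k, True)]"
proof -
  assume ki: "k < i"
  have "fr_eq r ([(k, True), (i, False)] @ []) ([(k, True), (i, False)] @ [(k, False), (k, \<not> False)] @ [])"
    by (rule ins_cancel)
  moreover have "fr_eq r ([] @ [(k, True), (i, False), (k, False)] @ [(k, True)]) ([] @ [(i + r - 1, False)] @ [(k, True)])"
    by (rule fr_cong[OF relF[OF ki]])
  ultimately show ?thesis by simp (rule fr_eq.trans)
qed

lemma rel2: "i < k \<Longrightarrow> fr_eq r [(k, True), (i, False)] [(i, False), (k + r - 1, True)]"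
proof -
  assume ik: "i < k"
  have "fr_eq r ([] @ [(k, True), (i, False)]) ([] @ [(i, False), (i, \<not> False)] @ [(k, True), (i, False)])"
    by (rule ins_cancel)
  moreover have "fr_eq r ([(i, False)] @ [(i, True), (k, True), (i, False)] @ []) ([(i, False)] @ [(k + r - 1, True)] @ [])"
    by (rule fr_cong[OF relT[OF ik]])
  ultimately show ?thesis by simp (rule fr_eq.trans)
qed

lemma rel3: "i < k \<Longrightarrow> fr_eq r [(k, False), (i, False)] [(i, False), (k + r - 1, False)]"
proof -
  assume ik: "i < k"
  have "fr_eq r ([] @ [(k, False), (i, False)]) ([] @ [(i, False), (i, \<not> False)] @ [(k, False), (i, False)])"
    by (rule ins_cancel)
  moreover have "fr_eq r ([(i, False)] @ [(i, True), (k, False), (i, False)] @ []) ([(i, False)] @ [(k + r - 1, False)] @ [])"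
    by (rule fr_cong[OF relF[OF ik]])
  ultimately show ?thesis by simp (rule fr_eq.trans)
qed

lemma fr_cons: "fr_eq r u v \<Longrightarrow> fr_eq r (l # u) (l # v)"
  using fr_cong[of r u v "[l]" "[]"] by simp

lemma fr_pre2: "fr_eq r [a, b] [c, d] \<Longrightarrow> fr_eq r (a # b # w) (c # d # w)"
  using fr_cong[of r "[a, b]" "[c, d]" "[]" w] by simp

lemma push_neg: "\<exists>P' N'. fr_eq r ((k, True) # pw P) (pw P' @ winv (pw N'))"
proof (induction P arbitrary: k)
  case Nil
  have "fr_eq r ((k, True) # pw []) (pw [] @ winv (pw [k]))" by (simp add: fr_eq.refl)
  then show ?case by blast
next
  case (Cons i P)
  consider "i = k" | "k < i" | "i < k" by linarith
  then show ?case
  proof cases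
    case 1
    have "fr_eq r ([] @ [(k, True), (k, \<not> True)] @ pw P) ([] @ pw P)" by (rule fr_eq.cancel)
    then have "fr_eq r ((k, True) # pw (i # P)) (pw P @ winv (pw []))" using 1 by simp
    then show ?thesis by blast
  next
    case 2
    obtain P'' N'' where h: "fr_eq r ((k, True) # pw P) (pw P'' @ winv (pw N''))" using Cons by blast
    have "fr_eq r ((k, True) # (i, False) # pw P) ((i + r - 1, False) # (k, True) # pw P)"
      using fr_pre2[OF rel1[OF 2]] .
    moreover have "fr_eq r ((i + r - 1, False) # (k, True) # pw P) ((i + r - 1, False) # pw P'' @ winv (pw N''))"
      using fr_cons[OF h] .
    ultimately have "fr_eq r ((k, True) # pw (i # P)) (pw ((i + r - 1) # P'') @ winv (pw N''))"
      by (simp add: fr_eq.trans)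
    then show ?thesis by blast
  next
    case 3
    obtain P'' N'' where h: "fr_eq r ((k + r - 1, True) # pw P) (pw P'' @ winv (pw N''))" using Cons by blast
    have "fr_eq r ((k, True) # (i, False) # pw P) ((i, False) # (k + r - 1, True) # pw P)"
      using fr_pre2[OF rel2[OF 3]] .
    moreover have "fr_eq r ((i, False) # (k + r - 1, True) # pw P) ((i, False) # pw P'' @ winv (pw N''))"
      using fr_cons[OF h] .
    ultimately have "fr_eq r ((k, True) # pw (i # P)) (pw (i # P'') @ winv (pw N''))"
      by (simp add: fr_eq.trans)
    then show ?thesis by blast
  qed
qed

lemma seminormal: "\<exists>P N. fr_eq r w (pw P @ winv (pw N))"
proof (induction w)
  case Nil
  have "fr_eq r [] (pw [] @ winv (pw []))" by (simp add: fr_eq.refl)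
  then show ?case by blast
next
  case (Cons l w)
  obtain P N where h: "fr_eq r w (pw P @ winv (pw N))" using Cons by blast
  obtain k b where l: "l = (k, b)" by (cases l)
  show ?case
  proof (cases b)
    case False
    have "fr_eq r (l # w) (pw (k # P) @ winv (pw N))" using fr_cons[OF h] l False by simp
    then show ?thesis by blast
  next
    case True
    obtain P' N' where h2: "fr_eq r ((k, True) # pw P) (pw P' @ winv (pw N'))" using push_neg by blast
    have "fr_eq r (l # w) ((k, True) # pw P @ winv (pw N))" using fr_cons[OF h] l True by simp
    moreover have "fr_eq r (((k, True) # pw P) @ winv (pw N)) ((pw P' @ winv (pw N')) @ winv (pw N))"
      using fr_app[OF h2 fr_eq.refl] .
    ultimately have "fr_eq r (l # w) (pw P' @ winv (pw (N @ N')))" by (simp add: fr_eq.trans)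
    then show ?thesis by blast
  qed
qed

fun ins :: "nat \<Rightarrow> nat \<Rightarrow> nat list \<Rightarrow> nat list" where
  "ins r k [] = [k]"
| "ins r k (i # xs) = (if k \<le> i then k # i # xs else i # ins r (k + r - 1) xs)"

fun isort :: "nat \<Rightarrow> nat list \<Rightarrow> nat list" where
  "isort r [] = []"
| "isort r (k # xs) = ins r k (isort r xs)"

lemma ins_fr: "fr_eq r (pw (k # xs)) (pw (ins r k xs))"
proof (induction xs arbitrary: k)
  case Nil then show ?case by (simp add: fr_eq.refl)
next
  case (Cons i xs)
  show ?case
  proof (cases "k \<le> i")
    case True then show ?thesis by (simp add: fr_eq.refl)
  next
    case False
    have "fr_eq r ((k, False) # (i, False) # pw xs) ((i, False) # (k + r - 1, False) # pw xs)"
      using fr_pre2[OF rel3] False by simp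
    moreover have "fr_eq r ((i, False) # pw ((k + r - 1) # xs)) ((i, False) # pw (ins r (k + r - 1) xs))"
      using fr_cons[OF Cons.IH] .
    ultimately show ?thesis using False by (simp add: fr_eq.trans)
  qed
qed

lemma ins_set: "r \<ge> 1 \<Longrightarrow> x \<in> set (ins r k xs) \<Longrightarrow> x \<in> set xs \<or> k \<le> x"
proof (induction xs arbitrary: k)
  case Nil then show ?case by simp
next
  case (Cons i xs)
  show ?case
  proof (cases "k \<le> i")
    case True then show ?thesis using Cons.prems by auto
  next
    case False
    then have "x = i \<or> x \<in> set (ins r (k + r - 1) xs)" using Cons.prems by simp
    then show ?thesis using Cons.IH[of "k + r - 1"] Cons.prems by auto
  qed
qed

lemma ins_sorted: "r \<ge> 1 \<Longrightarrow> sorted xs \<Longrightarrow> sorted (ins r k xs)"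
proof (induction xs arbitrary: k)
  case Nil then show ?case by simp
next
  case (Cons i xs)
  show ?case
  proof (cases "k \<le> i")
    case True then show ?thesis using Cons.prems by (auto intro: order_trans)
  next
    case False
    have "\<forall>x\<in>set (ins r (k + r - 1) xs). i \<le> x"
      using ins_set Cons.prems False by fastforce
    then show ?thesis using Cons False by simp
  qed
qed

lemma length_ins[simp]: "length (ins r k xs) = Suc (length xs)"
  by (induction xs arbitrary: k) auto

lemma isort_fr: "fr_eq r (pw xs) (pw (isort r xs))"
proof (induction xs)
  case Nil then show ?case by (simp add: fr_eq.refl)
next
  case (Cons k xs)
  have "fr_eq r ((k, False) # pw xs) ((k, False) # pw (isort r xs))" using fr_cons[OF Cons.IH] .
  moreover have "fr_eq r (pw (k # isort r xs)) (pw (ins r k (isort r xs)))" by (rule ins_fr)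
  ultimately show ?case by (simp add: fr_eq.trans)
qed

lemma isort_sorted: "r \<ge> 1 \<Longrightarrow> sorted (isort r xs)"
  by (induction xs) (auto simp: ins_sorted)

lemma length_isort[simp]: "length (isort r xs) = length xs"
  by (induction xs) auto

definition o1 :: "nat \<Rightarrow> nat" where "o1 = (\<lambda>i. 1)"
lemma vs_o1: "r \<ge> 2 \<Longrightarrow> vs r o1" by (simp add: vs_def o1_def)

lemma pres_gen: "r \<ge> 1 \<Longrightarrow> pres r (gen r l)" by (simp add: pres_def gen_valid)

lemma act_winv_pw_Cons: "act r (winv (pw (i # a))) = act r (winv (pw a)) \<circ> gen r (i, True)"
  by (simp add: fun_eq_iff)

lemma U1:
  assumes r: "r \<ge> 2"
  shows "(i, []) \<in> Bad r (act r (winv (pw (i # a))))"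
proof -
  have r1: "r \<ge> 1" using r by simp
  have "\<not> good r (act r (winv (pw (i # a)))) (i, [])"
  proof
    assume "good r (act r (winv (pw (i # a)))) (i, [])"
    then obtain c' where h: "\<forall>s. vs r s \<longrightarrow> act r (winv (pw a)) (gen r (i, True) (cat (i, []) s)) = cat c' s"
      unfolding good_def act_winv_pw_Cons by auto
    have e: "\<And>s. vs r s \<Longrightarrow> act r (winv (pw a)) (i + s 0, stl s) = cat c' s" using h by (simp add: cat_def)
    have z: "vs r z0" using vs_z0 r1 .
    have vy0: "vpt r (i + z0 0, stl z0)" using z by (simp add: vpt_def)
    have "vpt r (cat c' z0)" using e[OF z] act_valid[OF r1 vy0] by metis
    then have vc': "vcyl r c'" by simp
    have g: "good r (act r (pw a)) c'" using Bad_pos[OF r, of a] vc' unfolding Bad_def by blast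
    define C where "C = cimg r (act r (pw a)) c'"
    have key: "\<And>s. vs r s \<Longrightarrow> (i + s 0, stl s) = cat C s"
    proof -
      fix s assume s: "vs r s"
      have vy: "vpt r (i + s 0, stl s)" using s by (simp add: vpt_def)
      have "(i + s 0, stl s) = act r (pw a) (act r (winv (pw a)) (i + s 0, stl s))"
        using act_winv2[OF r1 vy] by simp
      also have "\<dots> = act r (pw a) (cat c' s)" using e[OF s] by simp
      also have "\<dots> = cat C s" using cimg_spec[OF r g s] C_def by simp
      finally show "(i + s 0, stl s) = cat C s" .
    qed
    have "i + z0 0 = fst C" using key[OF z] by (simp add: cat_def)
    moreover have "i + o1 0 = fst C" using key[OF vs_o1[OF r]] by (simp add: cat_def)
    ultimately show False by (simp add: z0_def o1_def)
  qed
  then show ?thesis by (simp add: Bad_def vcyl_def)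
qed

lemma U2:
  assumes r: "r \<ge> 2"
  shows "(\<forall>x\<in>set a. m \<le> x) \<Longrightarrow> Bad r (act r (winv (pw a))) \<subseteq> {c. m \<le> fst c}"
proof (induction a)
  case Nil
  have "good r (act r (winv (pw []))) c" for c unfolding good_def by (intro exI[of _ c]) simp
  then show ?case unfolding Bad_def by blast
next
  case (Cons i a)
  have r1: "r \<ge> 1" using r by simp
  have IH: "Bad r (act r (winv (pw a))) \<subseteq> {c. m \<le> fst c}" using Cons by simp
  have mi: "m \<le> i" using Cons.prems by simp
  have sub: "Bad r (act r (winv (pw (i # a)))) \<subseteq> Bad r (gen r (i, True)) \<union>
     {c. vcyl r c \<and> good r (gen r (i, True)) c \<and> cimg r (gen r (i, True)) c \<in> Bad r (act r (winv (pw a)))}"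
    unfolding act_winv_pw_Cons using L1[OF r pres_gen[OF r1]] by blast
  show ?case
  proof
    fix c assume c: "c \<in> Bad r (act r (winv (pw (i # a))))"
    show "c \<in> {c. m \<le> fst c}"
    proof (cases "c \<in> Bad r (gen r (i, True))")
      case True
      then show ?thesis using Bad_gen_T mi by fastforce
    next
      case False
      then have cc: "good r (gen r (i, True)) c" "cimg r (gen r (i, True)) c \<in> Bad r (act r (winv (pw a)))"
        using sub c by auto
      show ?thesis
      proof (cases "fst c < i")
        case True
        have "\<forall>s. vs r s \<longrightarrow> gen r (i, True) (cat c s) = cat c s" using True by (simp add: cat_def)
        then have "cimg r (gen r (i, True)) c = c" using cimg_eq[OF r] by blast
        then show ?thesis using cc IH by auto
      next
        case False
        then show ?thesis using mi by simp
      qed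
    qed
  qed
qed

lemma inv_eq:
  assumes r: "r \<ge> 1" and h: "\<forall>x. vpt r x \<longrightarrow> act r u x = act r v x"
  shows "\<forall>x. vpt r x \<longrightarrow> act r (winv u) x = act r (winv v) x"
proof (intro allI impI)
  fix x assume x: "vpt r x"
  have vx: "vpt r (act r (winv v) x)" using act_valid[OF r x] .
  have "act r (winv u) x = act r (winv u) (act r v (act r (winv v) x))" using act_winv2[OF r x] by simp
  also have "\<dots> = act r (winv u) (act r u (act r (winv v) x))" using h vx by metis
  also have "\<dots> = act r (winv v) x" using act_winv[OF r vx] by simp
  finally show "act r (winv u) x = act r (winv v) x" .
qed

lemma lemmaU:
  assumes r: "r \<ge> 2"
  shows "sorted a \<Longrightarrow> sorted b \<Longrightarrow> (\<forall>x. vpt r x \<longrightarrow> act r (pw a) x = act r (pw b) x) \<Longrightarrow> a = b"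
proof (induction a arbitrary: b)
  case Nil
  have r1: "r \<ge> 1" using r by simp
  show ?case
  proof (cases b)
    case (Cons j b')
    have "\<forall>x. vpt r x \<longrightarrow> act r (winv (pw [])) x = act r (winv (pw b)) x" using inv_eq[OF r1 Nil.prems(3)] .
    then have "Bad r (act r (winv (pw []))) = Bad r (act r (winv (pw b)))" by (intro Bad_cong) blast
    moreover have "Bad r (act r (winv (pw []))) = {}"
    proof -
      have "good r (act r (winv (pw []))) c" for c unfolding good_def by (intro exI[of _ c]) simp
      then show ?thesis unfolding Bad_def by blast
    qed
    ultimately show ?thesis using U1[OF r, of j b'] Cons by simp
  qed simp
next
  case (Cons i a)
  have r1: "r \<ge> 1" using r by simp
  show ?case
  proof (cases b)
    case Nil
    have "\<forall>x. vpt r x \<longrightarrow> act r (winv (pw b)) x = act r (winv (pw (i # a))) x"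
      using inv_eq[OF r1] Cons.prems(3) by metis
    then have "Bad r (act r (winv (pw b))) = Bad r (act r (winv (pw (i # a))))" by (intro Bad_cong) blast
    moreover have "Bad r (act r (winv (pw b))) = {}"
    proof -
      have "good r (act r (winv (pw b))) c" for c unfolding good_def Nil by (intro exI[of _ c]) simp
      then show ?thesis unfolding Bad_def by blast
    qed
    ultimately show ?thesis using U1[OF r, of i a] by simp
  next
    case (Cons j b')
    have "\<forall>x. vpt r x \<longrightarrow> act r (winv (pw (i # a))) x = act r (winv (pw b)) x" using inv_eq[OF r1 Cons.prems(3)[unfolded Cons]] Cons by simp
    then have BB: "Bad r (act r (winv (pw (i # a)))) = Bad r (act r (winv (pw (j # b'))))" using Cons by (intro Bad_cong) blast
    have "\<forall>x\<in>set (j # b'). j \<le> x" using Cons.prems(2) Cons by simp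
    then have "i \<ge> j" using U2[OF r] U1[OF r, of i a] BB by fastforce
    moreover have "\<forall>x\<in>set (i # a). i \<le> x" using Cons.prems(1) by simp
    then have "j \<ge> i" using U2[OF r] U1[OF r, of j b'] BB by fastforce
    ultimately have ij: "i = j" by simp
    have "\<forall>x. vpt r x \<longrightarrow> act r (pw a) x = act r (pw b') x"
    proof (intro allI impI)
      fix x assume x: "vpt r x"
      have "act r (pw (i # a)) x = act r (pw b) x" using Cons.prems(3) x by blast
      then have "gen r (i, False) (act r (pw a) x) = gen r (i, False) (act r (pw b') x)"
        using Cons ij by simp
      moreover have "gen r (i, \<not> False) (gen r (i, False) (act r (pw a) x)) = act r (pw a) x"
        by (rule gen_inv[OF r1 act_valid[OF r1 x]])
      moreover have "gen r (i, \<not> False) (gen r (i, False) (act r (pw b') x)) = act r (pw b') x"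
        by (rule gen_inv[OF r1 act_valid[OF r1 x]])
      ultimately show "act r (pw a) x = act r (pw b') x" by simp
    qed
    moreover have "sorted a" "sorted b'" using Cons.prems(1,2) Cons by simp_all
    ultimately have "a = b'" using Cons.IH by blast
    then show ?thesis using ij Cons by simp
  qed
qed

lemma faithful:
  assumes r: "r \<ge> 2" and h: "\<forall>x. vpt r x \<longrightarrow> act r w x = x"
  shows "fr_eq r w []"
proof -
  have r1: "r \<ge> 1" using r by simp
  obtain P N where PN: "fr_eq r w (pw P @ winv (pw N))" using seminormal by blast
  have "\<forall>y. vpt r y \<longrightarrow> act r (pw P) y = act r (pw N) y"
  proof (intro allI impI)
    fix y assume y: "vpt r y"
    have vx: "vpt r (act r (pw N) y)" using act_valid[OF r1 y] .
    have "act r w (act r (pw N) y) = act r (pw N) y" using h vx by blast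
    then have "act r (pw P) (act r (winv (pw N)) (act r (pw N) y)) = act r (pw N) y"
      using act_fr[OF PN r1 vx] by simp
    then show "act r (pw P) y = act r (pw N) y" using act_winv[OF r1 y] by simp
  qed
  moreover have "\<forall>y. vpt r y \<longrightarrow> act r (pw P) y = act r (pw (isort r P)) y" using act_fr[OF isort_fr r1] by blast
  moreover have "\<forall>y. vpt r y \<longrightarrow> act r (pw N) y = act r (pw (isort r N)) y" using act_fr[OF isort_fr r1] by blast
  ultimately have "\<forall>y. vpt r y \<longrightarrow> act r (pw (isort r P)) y = act r (pw (isort r N)) y" by simp
  then have "isort r P = isort r N" using lemmaU[OF r] isort_sorted[OF r1] by blast
  then have PN2: "fr_eq r (pw P) (pw N)" using isort_fr[of r P] isort_fr[of r N] by (metis fr_eq.sym fr_eq.trans)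
  have "fr_eq r (pw P @ winv (pw N)) (pw N @ winv (pw N))" using fr_app[OF PN2 fr_eq.refl] .
  then show ?thesis using PN cancel_w by (metis fr_eq.trans)
qed

lemma last_letter:
  assumes r: "r \<ge> 2"
  shows "a \<noteq> [] \<Longrightarrow> \<exists>c\<in>Bad r (act r (winv (pw a))). last a \<le> fst c + (r - 1) * (length a - 1)"
proof (induction a)
  case Nil then show ?case by simp
next
  case (Cons i a)
  have r1: "r \<ge> 1" using r by simp
  show ?case
  proof (cases "a = []")
    case True
    then show ?thesis using U1[OF r, of i "[]"] by force
  next
    case False
    obtain c where c: "c \<in> Bad r (act r (winv (pw a)))" and cl: "last a \<le> fst c + (r - 1) * (length a - 1)"
      using Cons.IH False by blast
    let ?G = "act r (winv (pw a))"
    let ?c2 = "cx r i c"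
    have vc: "vcyl r c" using c by (simp add: Bad_def)
    have vc2: "vcyl r ?c2" using vc by (auto simp: cx_def vcyl_def)
    have "\<not> good r (?G \<circ> gen r (i, True)) ?c2"
    proof
      assume "good r (?G \<circ> gen r (i, True)) ?c2"
      then obtain c' where h: "\<forall>s. vs r s \<longrightarrow> (?G \<circ> gen r (i, True)) (cat ?c2 s) = cat c' s"
        unfolding good_def by blast
      have "\<forall>s. vs r s \<longrightarrow> ?G (cat c s) = cat c' s"
      proof (intro allI impI)
        fix s assume s: "vs r s"
        have "gen r (i, True) (cat ?c2 s) = gen r (i, \<not> False) (gen r (i, False) (cat c s))"
          by (simp add: gen_cat_F)
        also have "\<dots> = cat c s" using gen_inv[OF r1, of "cat c s" i False] vc s by simp
        finally show "?G (cat c s) = cat c' s" using h s by (metis comp_apply)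
      qed
      then have "good r ?G c" unfolding good_def by blast
      then show False using c by (simp add: Bad_def)
    qed
    then have c2B: "?c2 \<in> Bad r (act r (winv (pw (i # a))))" using vc2 act_winv_pw_Cons by (simp add: Bad_def)
    have f2: "fst c \<le> fst ?c2 + (r - 1)" by (auto simp: cx_def)
    have "length a \<ge> 1" using False by (cases a) auto
    then have eq: "(r - 1) * length a = (r - 1) * (length a - 1) + (r - 1)" by (cases "length a") auto
    have "last (i # a) = last a" using False by simp
    also have "\<dots> \<le> fst ?c2 + (r - 1) * (length a - 1) + (r - 1)" using cl f2 by linarith
    also have "\<dots> = fst ?c2 + (r - 1) * (length (i # a) - 1)" using eq by simp
    finally have "last (i # a) \<le> fst ?c2 + (r - 1) * (length (i # a) - 1)" .
    then show ?thesis using c2B by blast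
  qed
qed

definition mm :: "nat \<Rightarrow> nat \<Rightarrow> nat" where "mm p i = (if i = 0 then 0 else (i - 1) div (p - 1))"
definition bb :: "nat \<Rightarrow> nat \<Rightarrow> nat" where "bb p i = (if i = 0 then 0 else (i - 1) mod (p - 1) + 1)"
definition neg0 :: "nat \<Rightarrow> letter list" where "neg0 m = replicate m (0, True)"
definition pos0 :: "nat \<Rightarrow> letter list" where "pos0 m = replicate m (0, False)"

lemma mm_bb: "i = bb p i + mm p i * (p - 1)"
proof (cases "i = 0")
  case False
  have "(i - 1) mod (p - 1) + (i - 1) div (p - 1) * (p - 1) = i - 1" by (rule mod_div_mult_eq)
  then show ?thesis using False by (simp add: mm_def bb_def)
qed (simp add: mm_def bb_def)

lemma bb_lt: "p \<ge> 2 \<Longrightarrow> bb p i < p"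
proof -
  assume p: "p \<ge> 2"
  have "(i - 1) mod (p - 1) < p - 1" using p by simp
  then have "(i - 1) mod (p - 1) + 1 < p" by linarith
  then show ?thesis using p by (simp add: bb_def)
qed

lemma mm_le: "mm p i \<le> i" by (simp add: mm_def) (meson diff_le_self div_le_dividend le_trans)
lemma mm_mono: "i \<le> j \<Longrightarrow> mm p i \<le> mm p j" by (simp add: mm_def div_le_mono)

lemma conj0:
  assumes p: "p \<ge> 2" and b: "b \<ge> 1"
  shows "fr_eq p (neg0 m @ [(b, False)] @ pos0 m) [(b + m * (p - 1), False)]"
proof (induction m)
  case 0 then show ?case by (simp add: neg0_def pos0_def fr_eq.refl)
next
  case (Suc m)
  have e: "neg0 (Suc m) @ [(b, False)] @ pos0 (Suc m) = [(0, True)] @ (neg0 m @ [(b, False)] @ pos0 m) @ [(0, False)]"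
    by (simp add: neg0_def pos0_def replicate_append_same)
  have c1: "fr_eq p (neg0 (Suc m) @ [(b, False)] @ pos0 (Suc m)) ([(0, True)] @ [(b + m * (p - 1), False)] @ [(0, False)])"
    unfolding e by (rule fr_cong[OF Suc.IH])
  have eqn: "b + m * (p - 1) + p - 1 = b + Suc m * (p - 1)" using p by simp
  have c2: "fr_eq p [(0, True), (b + m * (p - 1), False), (0, False)] [(b + Suc m * (p - 1), False)]"
    using relF[of 0 "b + m * (p - 1)" p] b unfolding eqn by simp
  show ?case using c1 c2 by (simp only: append.simps) (rule fr_eq.trans)
qed

lemma conj1:
  assumes p: "p \<ge> 2"
  shows "fr_eq p (neg0 (mm p i) @ [(bb p i, False)] @ pos0 (mm p i)) [(i, False)]"
proof (cases "i = 0")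
  case True then show ?thesis by (simp add: mm_def bb_def neg0_def pos0_def fr_eq.refl)
next
  case False
  have "bb p i \<ge> 1" using False by (simp add: bb_def)
  then show ?thesis using conj0[OF p, of "bb p i" "mm p i"] mm_bb[of i p] by simp
qed

fun tele :: "nat \<Rightarrow> nat \<Rightarrow> nat list \<Rightarrow> letter list" where
  "tele p m0 [] = pos0 m0"
| "tele p m0 (i # xs) = neg0 (mm p i - m0) @ [(bb p i, False)] @ tele p (mm p i) xs"

lemma winv_pos0: "winv (pos0 m) = neg0 m"
  by (induction m) (simp_all add: pos0_def neg0_def replicate_append_same)

lemma tele_fr:
  assumes p: "p \<ge> 2"
  shows "sorted xs \<Longrightarrow> (\<forall>i\<in>set xs. m0 \<le> mm p i) \<Longrightarrow> fr_eq p (pos0 m0 @ pw xs) (tele p m0 xs)"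
proof (induction xs arbitrary: m0)
  case Nil then show ?case by (simp add: fr_eq.refl)
next
  case (Cons i xs)
  have mi: "m0 \<le> mm p i" using Cons.prems by simp
  have IH: "fr_eq p (pos0 (mm p i) @ pw xs) (tele p (mm p i) xs)"
    using Cons.IH Cons.prems mm_mono by simp
  have s1: "fr_eq p (pos0 m0 @ [(i, False)] @ pw xs) (pos0 m0 @ (neg0 (mm p i) @ [(bb p i, False)] @ pos0 (mm p i)) @ pw xs)"
    by (rule fr_cong[OF fr_eq.sym[OF conj1[OF p]]])
  have nn: "neg0 (mm p i) = neg0 m0 @ neg0 (mm p i - m0)" using mi
    by (simp add: neg0_def replicate_add[symmetric])
  have s2: "fr_eq p ([] @ (pos0 m0 @ neg0 m0) @ (neg0 (mm p i - m0) @ [(bb p i, False)] @ pos0 (mm p i) @ pw xs))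
     ([] @ [] @ (neg0 (mm p i - m0) @ [(bb p i, False)] @ pos0 (mm p i) @ pw xs))"
    by (rule fr_cong) (use cancel_w[of p "pos0 m0"] winv_pos0 in simp)
  have s3: "fr_eq p ((neg0 (mm p i - m0) @ [(bb p i, False)]) @ (pos0 (mm p i) @ pw xs) @ [])
     ((neg0 (mm p i - m0) @ [(bb p i, False)]) @ tele p (mm p i) xs @ [])"
    by (rule fr_cong[OF IH])
  have t1: "fr_eq p (pos0 m0 @ pw (i # xs)) (pos0 m0 @ neg0 m0 @ neg0 (mm p i - m0) @ (bb p i, False) # pos0 (mm p i) @ pw xs)"
    using s1 nn by simp
  have t2: "fr_eq p (pos0 m0 @ neg0 m0 @ neg0 (mm p i - m0) @ (bb p i, False) # pos0 (mm p i) @ pw xs) (neg0 (mm p i - m0) @ (bb p i, False) # pos0 (mm p i) @ pw xs)"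
    using s2 by simp
  have t3: "fr_eq p (neg0 (mm p i - m0) @ (bb p i, False) # pos0 (mm p i) @ pw xs) (tele p m0 (i # xs))"
    using s3 by simp
  show ?case by (rule fr_eq.trans[OF fr_eq.trans[OF t1 t2] t3])
qed

lemma tele_len:
  "sorted xs \<Longrightarrow> (\<forall>i\<in>set xs. m0 \<le> mm p i \<and> mm p i \<le> M) \<Longrightarrow> m0 \<le> M \<Longrightarrow> length (tele p m0 xs) + m0 \<le> length xs + 2 * M"
proof (induction xs arbitrary: m0)
  case Nil then show ?case by (simp add: pos0_def)
next
  case (Cons i xs)
  have "\<forall>j\<in>set xs. mm p i \<le> mm p j \<and> mm p j \<le> M" using Cons.prems mm_mono by simp
  then have "length (tele p (mm p i) xs) + mm p i \<le> length xs + 2 * M" using Cons by simp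
  moreover have "m0 \<le> mm p i" using Cons.prems by simp
  ultimately show ?case by (simp add: neg0_def)
qed

lemma tele_letters: "p \<ge> 2 \<Longrightarrow> l \<in> set (tele p m0 xs) \<Longrightarrow> fst l < p"
  by (induction xs arbitrary: m0) (auto simp: neg0_def pos0_def bb_lt)

lemma set_winv_fst: "l \<in> set (winv w) \<Longrightarrow> \<exists>l'\<in>set w. fst l' = fst l"
  by (induction w) auto

lemma ball_fst: "(\<forall>(i, b)\<in>set w. i < (r::nat)) \<longleftrightarrow> (\<forall>l\<in>set w. fst l < r)"
  by auto

lemma sorted_le_last: "sorted xs \<Longrightarrow> x \<in> set xs \<Longrightarrow> x \<le> last (xs :: nat list)"
proof (induction xs)
  case Nil then show ?case by simp
next
  case (Cons a xs)
  show ?case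
  proof (cases "xs = []")
    case True then show ?thesis using Cons by simp
  next
    case False
    have "last xs \<in> set xs" using False by simp
    then have "a \<le> last xs" using Cons.prems by simp
    then show ?thesis using Cons False by auto
  qed
qed

lemma exists_word:
  assumes r: "r \<ge> 2"
  shows "\<exists>W. (\<forall>l\<in>set W. fst l < r) \<and> fr_eq r W G"
proof -
  have r1: "r \<ge> 1" using r by simp
  obtain P N where PN: "fr_eq r G (pw P @ winv (pw N))" using seminormal by blast
  let ?SP = "isort r P" and ?SN = "isort r N"
  have a: "fr_eq r (tele r 0 ?SP) (pw P)"
  proof -
    have "fr_eq r (pos0 0 @ pw ?SP) (tele r 0 ?SP)" using tele_fr[OF r] isort_sorted[OF r1] by simp
    then have "fr_eq r (tele r 0 ?SP) (pw ?SP)" by (simp add: pos0_def fr_eq.sym)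
    then show ?thesis using isort_fr[of r P] by (metis fr_eq.sym fr_eq.trans)
  qed
  have b: "fr_eq r (tele r 0 ?SN) (pw N)"
  proof -
    have "fr_eq r (pos0 0 @ pw ?SN) (tele r 0 ?SN)" using tele_fr[OF r] isort_sorted[OF r1] by simp
    then have "fr_eq r (tele r 0 ?SN) (pw ?SN)" by (simp add: pos0_def fr_eq.sym)
    then show ?thesis using isort_fr[of r N] by (metis fr_eq.sym fr_eq.trans)
  qed
  let ?W = "tele r 0 ?SP @ winv (tele r 0 ?SN)"
  have "fr_eq r ?W (pw P @ winv (pw N))" using fr_app[OF a fr_winv[OF b]] .
  then have "fr_eq r ?W G" using PN by (metis fr_eq.sym fr_eq.trans)
  moreover have "\<forall>l\<in>set ?W. fst l < r" using tele_letters[OF r] set_winv_fst by fastforce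
  ultimately show ?thesis by blast
qed

context pq
begin

lemma fr_j1: "fr_eq p u v \<Longrightarrow> fr_eq q (j1 d u) (j1 d v)"
proof (induction rule: fr_eq.induct)
  case (refl w) then show ?case by (rule fr_eq.refl)
next
  case (sym u v) show ?case using sym.IH by (rule fr_eq.sym)
next
  case (trans u v w) then show ?case by (metis fr_eq.trans)
next
  case (cancel u i b v)
  have "fr_eq q (j1 d u @ [(d * i, b), (d * i, \<not> b)] @ j1 d v) (j1 d u @ j1 d v)" by (rule fr_eq.cancel)
  then show ?case by simp
next
  case (rel i j u v)
  have dij: "d * i < d * j" using rel d0 by simp
  have "fr_eq q (j1 d u @ [(d * i, True), (d * j, False), (d * i, False)] @ j1 d v) (j1 d u @ [(d * j + q - 1, False)] @ j1 d v)"
    using dij by (rule fr_eq.rel)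
  moreover have "d * j + q - 1 = d * (j + p - 1)"
  proof -
    have "j + p - 1 = j + (p - 1)" using p2 by simp
    then have "d * (j + p - 1) = d * j + d * (p - 1)" by (simp add: distrib_left)
    then show ?thesis using pq q2 by simp
  qed
  ultimately show ?case by simp
qed

lemma lower:
  assumes w: "\<forall>l\<in>set w. fst l < q" and e: "fr_eq q w (j1 d G)"
  shows "\<exists>W. (\<forall>l\<in>set W. fst l < p) \<and> fr_eq p W G \<and> length W \<le> (2 + 8 * q + 4 * p) * length w"
proof -
  define n where "n = length w"
  define M where "M = n * (q + q)"
  have p1: "p \<ge> 1" and q1: "q \<ge> 1" using p2 q2 by simp_all
  have hq1: "\<forall>x. vpt q x \<longrightarrow> act q w x = act q (j1 d G) x" using act_fr[OF e q1] by blast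
  have hq2: "\<forall>x. vpt q x \<longrightarrow> act q (winv w) x = act q (j1 d (winv G)) x"
    using inv_eq[OF q1 hq1] j1_winv by simp
  have B1: "Bad q (act q (j1 d G)) = Bad q (act q w)" by (rule Bad_cong) (metis hq1)
  have B2: "Bad q (act q (j1 d (winv G))) = Bad q (act q (winv w))" by (rule Bad_cong) (metis hq2)
  have c1: "finite (Bad q (act q w)) \<and> card (Bad q (act q w)) \<le> n" using card_Bad_act[OF q2] n_def by simp
  have c2: "finite (Bad q (act q (winv w))) \<and> card (Bad q (act q (winv w))) \<le> n"
    using card_Bad_act[OF q2, of "winv w"] n_def by simp
  obtain T1 where T1: "tr q (act q w) M T1" using tr_act[OF q1, of w q] w M_def n_def by auto
  have w2: "\<forall>l\<in>set (winv w). fst l < q" using w set_winv_fst by fastforce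
  obtain T2 where T2: "tr q (act q (winv w)) M T2" using tr_act[OF q1, of "winv w" q] w2 M_def n_def by auto
  have t1: "Bad q (act q w) \<subseteq> {c. fst c < M}" using Bad_tr[OF T1] .
  have t2: "Bad q (act q (winv w)) \<subseteq> {c. fst c < M}" using Bad_tr[OF T2] .
  define D where "D = Bad p (act p G)"
  define R where "R = Bad p (act p (winv G))"
  have Dc: "finite D \<and> card D \<le> n" using Bad_emb_card[of G] B1 c1 D_def by simp
  have Rc: "finite R \<and> card R \<le> n" using Bad_emb_card[of "winv G"] B2 c2 R_def by simp
  have Dt: "D \<subseteq> {c. fst c < M}" using Bad_emb_tree[of G M] B1 t1 D_def by simp
  have Rt: "R \<subseteq> {c. fst c < M}" using Bad_emb_tree[of "winv G" M] B2 t2 R_def by simp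
  have Dv: "D \<subseteq> {c. vcyl p c}" unfolding D_def Bad_def by blast
  have Rv: "R \<subseteq> {c. vcyl p c}" unfolding R_def Bad_def by blast
  obtain ND where ND: "length ND = card D" "Leafmap p (pw ND) D"
    using construct[OF p2, of "card D"] Dc Dv upcl_Bad[of p "act p G"] D_def by blast
  obtain NR where NR: "length NR = card R" "Leafmap p (pw NR) R"
    using construct[OF p2, of "card R"] Rc Rv upcl_Bad[of p "act p (winv G)"] R_def by blast
  have idt: "\<forall>x. vpt p x \<longrightarrow> act p (winv (pw NR) @ G @ pw ND) x = x"
    using identity_lemma[OF p2, of ND G NR] ND NR D_def R_def by simp
  have f0: "fr_eq p (winv (pw NR) @ G @ pw ND) []" using faithful[OF p2 idt] .
  have GN: "fr_eq p G (pw NR @ winv (pw ND))"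
  proof -
    have a1: "fr_eq p (pw NR @ (winv (pw NR) @ G @ pw ND) @ winv (pw ND)) (pw NR @ [] @ winv (pw ND))"
      by (rule fr_cong[OF f0])
    have a2: "fr_eq p ((pw NR @ winv (pw NR)) @ G @ (pw ND @ winv (pw ND))) ([] @ G @ [])"
      using fr_app[OF cancel_w fr_app[OF fr_eq.refl cancel_w]] by simp
    show ?thesis using a1 a2 by simp (metis fr_eq.sym fr_eq.trans)
  qed
  define SD where "SD = isort p ND"
  define SR where "SR = isort p NR"
  define B where "B = M + p * n"
  have sSD: "sorted SD" "sorted SR" using isort_sorted[OF p1] SD_def SR_def by simp_all
  have lSD: "length SD \<le> n" "length SR \<le> n" using ND NR Dc Rc SD_def SR_def by simp_all
  have boundSD: "\<forall>i\<in>set SD. i \<le> B"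
  proof (cases "SD = []")
    case False
    obtain c where c: "c \<in> Bad p (act p (winv (pw SD)))" and cl: "last SD \<le> fst c + (p - 1) * (length SD - 1)"
      using last_letter[OF p2 False] by blast
    have "\<forall>x. vpt p x \<longrightarrow> act p (pw ND) x = act p (pw SD) x" using act_fr[OF isort_fr p1] SD_def by blast
    then have "\<forall>x. vpt p x \<longrightarrow> act p (winv (pw SD)) x = act p (winv (pw ND)) x" using inv_eq[OF p1] by metis
    then have "Bad p (act p (winv (pw SD))) = Bad p (act p (winv (pw ND)))" by (intro Bad_cong) metis
    then have "c \<in> D" using c Bad_inv_leaf[OF p2 ND(2)] by blast
    then have "fst c < M" using Dt by auto
    moreover have "(p - 1) * (length SD - 1) \<le> p * n" using lSD by (simp add: mult_le_mono)
    ultimately have "last SD \<le> B" using cl B_def by linarith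
    then show ?thesis using sorted_le_last[OF sSD(1)] by fastforce
  qed simp
  have boundSR: "\<forall>i\<in>set SR. i \<le> B"
  proof (cases "SR = []")
    case False
    obtain c where c: "c \<in> Bad p (act p (winv (pw SR)))" and cl: "last SR \<le> fst c + (p - 1) * (length SR - 1)"
      using last_letter[OF p2 False] by blast
    have "\<forall>x. vpt p x \<longrightarrow> act p (pw NR) x = act p (pw SR) x" using act_fr[OF isort_fr p1] SR_def by blast
    then have "\<forall>x. vpt p x \<longrightarrow> act p (winv (pw SR)) x = act p (winv (pw NR)) x" using inv_eq[OF p1] by metis
    then have "Bad p (act p (winv (pw SR))) = Bad p (act p (winv (pw NR)))" by (intro Bad_cong) metis
    then have "c \<in> R" using c Bad_inv_leaf[OF p2 NR(2)] by blast
    then have "fst c < M" using Rt by auto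
    moreover have "(p - 1) * (length SR - 1) \<le> p * n" using lSD by (simp add: mult_le_mono)
    ultimately have "last SR \<le> B" using cl B_def by linarith
    then show ?thesis using sorted_le_last[OF sSD(2)] by fastforce
  qed simp
  have mD: "\<forall>i\<in>set SD. 0 \<le> mm p i \<and> mm p i \<le> B" using boundSD mm_le le_trans by blast
  have mR: "\<forall>i\<in>set SR. 0 \<le> mm p i \<and> mm p i \<le> B" using boundSR mm_le le_trans by blast
  have lenD: "length (tele p 0 SD) \<le> length SD + 2 * B" using tele_len[OF sSD(1) mD] by simp
  have lenR: "length (tele p 0 SR) \<le> length SR + 2 * B" using tele_len[OF sSD(2) mR] by simp
  let ?W = "tele p 0 SR @ winv (tele p 0 SD)"
  have "length ?W \<le> 2 * n + 4 * B" using lenD lenR lSD by simp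
  also have "\<dots> = (2 + 8 * q + 4 * p) * n" unfolding B_def M_def by (simp add: algebra_simps)
  finally have len: "length ?W \<le> (2 + 8 * q + 4 * p) * length w" using n_def by simp
  have a: "fr_eq p (tele p 0 SR) (pw NR)"
  proof -
    have "fr_eq p (pos0 0 @ pw SR) (tele p 0 SR)" using tele_fr[OF p2 sSD(2)] by simp
    then have "fr_eq p (tele p 0 SR) (pw SR)" by (simp add: pos0_def fr_eq.sym)
    then show ?thesis using isort_fr[of p NR] SR_def by (metis fr_eq.sym fr_eq.trans)
  qed
  have b: "fr_eq p (tele p 0 SD) (pw ND)"
  proof -
    have "fr_eq p (pos0 0 @ pw SD) (tele p 0 SD)" using tele_fr[OF p2 sSD(1)] by simp
    then have "fr_eq p (tele p 0 SD) (pw SD)" by (simp add: pos0_def fr_eq.sym)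
    then show ?thesis using isort_fr[of p ND] SD_def by (metis fr_eq.sym fr_eq.trans)
  qed
  have "fr_eq p ?W (pw NR @ winv (pw ND))" using fr_app[OF a fr_winv[OF b]] .
  then have "fr_eq p ?W G" using GN by (metis fr_eq.sym fr_eq.trans)
  moreover have "\<forall>l\<in>set ?W. fst l < p" using tele_letters[OF p2] set_winv_fst by fastforce
  ultimately show ?thesis using len by blast
qed

end

theorem proposition8:
  fixes p q d :: nat
  assumes "p \<ge> 2" and "q \<ge> 2" and "d > 0" and "q - 1 = d * (p - 1)"
  shows "\<exists>C K :: real. C \<ge> 1 \<and> K \<ge> 0 \<and>
    (\<forall>u v. real (word_dist p u v) / C - K \<le> real (word_dist q (j1 d u) (j1 d v))
          \<and> real (word_dist q (j1 d u) (j1 d v)) \<le> C * real (word_dist p u v) + K)"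
proof -
  interpret pq p q d using assms by unfold_locales
  define Cn :: nat where "Cn = 2 + 8 * q + 4 * p"
  have main: "word_dist p u v \<le> Cn * word_dist q (j1 d u) (j1 d v) \<and> word_dist q (j1 d u) (j1 d v) \<le> word_dist p u v"
    for u v
  proof -
    let ?G = "winv u @ v"
    let ?Sp = "\<lambda>n. \<exists>w. length w = n \<and> (\<forall>(i, b)\<in>set w. i < p) \<and> fr_eq p w (winv u @ v)"
    let ?Sq = "\<lambda>n. \<exists>w. length w = n \<and> (\<forall>(i, b)\<in>set w. i < q) \<and> fr_eq q w (winv (j1 d u) @ j1 d v)"
    have dpd: "word_dist p u v = Least ?Sp" by (rule word_dist_def)
    have dqd: "word_dist q (j1 d u) (j1 d v) = Least ?Sq" by (rule word_dist_def)
    have jG: "j1 d ?G = winv (j1 d u) @ j1 d v" by (simp add: j1_winv)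
    obtain W where W: "\<forall>l\<in>set W. fst l < p" "fr_eq p W ?G" using exists_word[OF p2] by blast
    have Wb: "\<forall>(i, b)\<in>set W. i < p" unfolding ball_fst by (rule W(1))
    have "?Sp (length W)" using Wb W(2) by (intro exI[of _ W]) simp
    then have "?Sp (Least ?Sp)" by (rule LeastI)
    then obtain w0 where w0: "length w0 = Least ?Sp" "\<forall>(i, b)\<in>set w0. i < p" "fr_eq p w0 ?G"
      by blast
    have w02: "\<forall>l\<in>set w0. fst l < p" using w0(2) unfolding ball_fst .
    have jl: "\<forall>l\<in>set (j1 d w0). fst l < q"
    proof
      fix l assume "l \<in> set (j1 d w0)"
      then obtain l0 where l0: "l0 \<in> set w0" "l = (d * fst l0, snd l0)" by (auto simp: j1_def)
      have "fst l0 \<le> p - 1" using w02 l0(1) by fastforce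
      then have "d * fst l0 \<le> d * (p - 1)" by simp
      then have "d * fst l0 < q" using pq q2 by linarith
      then show "fst l < q" using l0(2) by simp
    qed
    have jf: "fr_eq q (j1 d w0) (winv (j1 d u) @ j1 d v)" using fr_j1[OF w0(3)] jG by simp
    have jl2: "\<forall>(i, b)\<in>set (j1 d w0). i < q" unfolding ball_fst by (rule jl)
    have Sq0: "?Sq (length (j1 d w0))" using jl2 jf by (intro exI[of _ "j1 d w0"]) simp
    have "Least ?Sq \<le> length (j1 d w0)" using Sq0 by (rule Least_le)
    then have le1: "Least ?Sq \<le> Least ?Sp" using w0(1) by simp
    have "?Sq (Least ?Sq)" using Sq0 by (rule LeastI)
    then obtain w1 where w1: "length w1 = Least ?Sq" "\<forall>(i, b)\<in>set w1. i < q" "fr_eq q w1 (winv (j1 d u) @ j1 d v)"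
      by blast
    have w12: "\<forall>l\<in>set w1. fst l < q" using w1(2) unfolding ball_fst .
    obtain W2 where W2: "\<forall>l\<in>set W2. fst l < p" "fr_eq p W2 ?G" "length W2 \<le> Cn * length w1"
      using lower[OF w12, of ?G] w1(3) jG Cn_def by auto
    have W2b: "\<forall>(i, b)\<in>set W2. i < p" unfolding ball_fst by (rule W2(1))
    have "?Sp (length W2)" using W2b W2(2) by (intro exI[of _ W2]) simp
    then have "Least ?Sp \<le> length W2" by (rule Least_le)
    then have "Least ?Sp \<le> Cn * Least ?Sq" using W2(3) w1(1) by simp
    then show ?thesis using le1 dpd dqd by simp
  qed
  have C1: "real Cn \<ge> 1" unfolding Cn_def by simp
  have "\<forall>u v. real (word_dist p u v) / real Cn - 0 \<le> real (word_dist q (j1 d u) (j1 d v))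
          \<and> real (word_dist q (j1 d u) (j1 d v)) \<le> real Cn * real (word_dist p u v) + 0"
  proof (intro allI conjI)
    fix u v
    have m: "word_dist p u v \<le> Cn * word_dist q (j1 d u) (j1 d v)" "word_dist q (j1 d u) (j1 d v) \<le> word_dist p u v"
      using main by blast+
    have "real (word_dist p u v) \<le> real Cn * real (word_dist q (j1 d u) (j1 d v))"
      using m(1) by (metis of_nat_le_iff of_nat_mult)
    then show "real (word_dist p u v) / real Cn - 0 \<le> real (word_dist q (j1 d u) (j1 d v))"
      using C1 by (simp add: divide_le_eq mult.commute)
    have "real (word_dist p u v) \<le> real Cn * real (word_dist p u v)"
      using C1 mult_right_mono[OF C1, of "real (word_dist p u v)"] by simp
    then show "real (word_dist q (j1 d u) (j1 d v)) \<le> real Cn * real (word_dist p u v) + 0"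
      using m(2) by simp
  qed
  then show ?thesis using C1 by (intro exI[of _ "real Cn"] exI[of _ 0]) simp
qed

end
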